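(* Let $d\ge2$, let $\mathbf A,\mathbf B\in\overline{\mathbb Q}[t]$ be nonzero coprime polynomials such that $\mathbf c=\mathbf A/\mathbf B$ is nonconstant, and let $|\cdot|_v$ be an absolute value on $\overline{\mathbb Q}$. Then there is a constant $C$, depending only on $v$ and on the coefficients of $\mathbf A$ and $\mathbf B$, such that for every $\lambda_0\in\overline{\mathbb Q}^*$ with $\mathbf c(\lambda_0)\ne0,\infty$, $$\left|\lim_{n\to\infty}\frac{\log M_{n,v}}{d^n}-\frac{\log M_{2,v}}{d^2}\right|\le C,$$ where $M_{n,v}=\max\{|\mathbf A_{\mathbf c,n}(\lambda_0)|_v,|\mathbf B_{\mathbf c,n}(\lambda_0)|_v\}$.
   Context: The polynomials $\mathbf A_{\mathbf c,n},\mathbf B_{\mathbf c,n}$ are defined by: $\mathbf A_{\mathbf c,0}=\mathbf A$, $\mathbf B_{\mathbf c,0}=\mathbf B$; if $\mathbf A(0)\neq0$ then $\mathbf A_{\mathbf c,1}=\mathbf A^d+t\mathbf B^d$, $\mathbf B_{\mathbf c,1}=\mathbf A\mathbf B^{d-1}$, while if $\mathbf A(0)=0$ then $\mathbf A_{\mathbf c,1}=(\mathbf A^d+t\mathbf B^d)/t$, $\mathbf B_{\mathbf c,1}=\mathbf A\mathbf B^{d-1}/t$; for $n\ge1$, $\mathbf A_{\mathbf c,n+1}=\mathbf A_{\mathbf c,n}^d+t\mathbf B_{\mathbf c,n}^d$, $\mathbf B_{\mathbf c,n+1}=\mathbf A_{\mathbf c,n}\mathbf B_{\mathbf c,n}^{d-1}$.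 *)

theory Defs
  imports "HOL-Computational_Algebra.Computational_Algebra"
begin

text \<open>Qbar is modelled as the algebraic complex numbers; polynomials in Qbar[t]
  are complex polynomials all of whose coefficients are algebraic.\<close>

definition qbar_poly :: "complex poly \<Rightarrow> bool" where
  "qbar_poly p \<longleftrightarrow> (\<forall>i. algebraic (coeff p i))"

text \<open>An absolute value on Qbar (given as a function on complex numbers,
  of which only the values on algebraic numbers matter).\<close>

definition abs_value_qbar :: "(complex \<Rightarrow> real) \<Rightarrow> bool" where
  "abs_value_qbar v \<longleftrightarrow>
     (\<forall>x. algebraic x \<longrightarrow> v x \<ge> 0) \<and>
     (\<forall>x. algebraic x \<longrightarrow> (v x = 0 \<longleftrightarrow> x = 0)) \<and>
     (\<forall>x y. algebraic x \<longrightarrow> algebraic y \<longrightarrow> v (x * y) = v x * v y) \<and>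
     (\<forall>x y. algebraic x \<longrightarrow> algebraic y \<longrightarrow> v (x + y) \<le> v x + v y)"

fun ABc :: "nat \<Rightarrow> complex poly \<Rightarrow> complex poly \<Rightarrow> nat \<Rightarrow> complex poly \<times> complex poly" where
  "ABc d A B 0 = (A, B)"
| "ABc d A B (Suc 0) =
     (if poly A 0 \<noteq> 0
      then (A ^ d + [:0, 1:] * B ^ d, A * B ^ (d - 1))
      else ((A ^ d + [:0, 1:] * B ^ d) div [:0, 1:], (A * B ^ (d - 1)) div [:0, 1:]))"
| "ABc d A B (Suc (Suc n)) =
     (let (An, Bn) = ABc d A B (Suc n)
      in (An ^ d + [:0, 1:] * Bn ^ d, An * Bn ^ (d - 1)))"

definition Acn :: "nat \<Rightarrow> complex poly \<Rightarrow> complex poly \<Rightarrow> nat \<Rightarrow> complex poly" where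
  "Acn d A B n = fst (ABc d A B n)"

definition Bcn :: "nat \<Rightarrow> complex poly \<Rightarrow> complex poly \<Rightarrow> nat \<Rightarrow> complex poly" where
  "Bcn d A B n = snd (ABc d A B n)"

definition Mnv :: "(complex \<Rightarrow> real) \<Rightarrow> nat \<Rightarrow> complex poly \<Rightarrow> complex poly \<Rightarrow> complex \<Rightarrow> nat \<Rightarrow> real" where
  "Mnv v d A B lam n = max (v (poly (Acn d A B n) lam)) (v (poly (Bcn d A B n) lam))"

end

theory Submission
  imports Defs
begin

definition qscale :: "rat \<Rightarrow> complex \<Rightarrow> complex" where "qscale q z = of_rat q * z"

interpretation Q: vector_space qscale
  by unfold_locales (auto simp: qscale_def algebra_simps of_rat_add of_rat_mult)

lemma Q_span_mult:
  assumes "w \<in> Q.span A" "\<And>a. a \<in> A \<Longrightarrow> c * a \<in> Q.span S"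
  shows "c * w \<in> Q.span S"
  using assms(1)
proof (induction rule: Q.span_induct_alt)
  case base then show ?case by (simp add: Q.span_zero)
next
  case (step q x y)
  have "c * (qscale q x + y) = qscale q (c * x) + c * y" by (simp add: qscale_def algebra_simps)
  then show ?case using step assms(2) by (simp add: Q.span_add Q.span_scale)
qed

lemma alg_of_mult:
  assumes fin: "finite S" and one: "1 \<in> Q.span S" and cl: "\<And>s. s \<in> S \<Longrightarrow> z * s \<in> Q.span S"
  shows "algebraic z"
proof -
  have pw: "z ^ i \<in> Q.span S" for i
  proof (induction i)
    case 0 then show ?case using one by simp
  next
    case (Suc i) then show ?case using Q_span_mult[OF Suc cl] by simp
  qed
  define N where "N = card S"
  show ?thesis
  proof (cases "inj_on (\<lambda>i. z ^ i) {..N}")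
    case False
    then obtain i j where ij: "i \<le> N" "j \<le> N" "i \<noteq> j" "z ^ i = z ^ j" unfolding inj_on_def by auto
    define p :: "complex poly" where "p = monom 1 i - monom 1 j"
    have "coeff p i = 1" using ij(3) by (simp add: p_def coeff_monom)
    then have "p \<noteq> 0" by auto
    moreover have "poly p z = 0" using ij(4) by (simp add: p_def poly_monom)
    moreover have "coeff p k \<in> \<int>" for k by (simp add: p_def coeff_monom)
    ultimately show ?thesis by (intro algebraicI[of p]) auto
  next
    case True
    define B where "B = (\<lambda>i. z ^ i) ` {..N}"
    have cardB: "card B = N + 1" using True by (simp add: B_def card_image)
    have "Q.dependent B"
    proof (rule ccontr)
      assume ind: "\<not> Q.dependent B"
      have "B \<subseteq> Q.span S" using pw B_def by auto
      from Q.independent_span_bound[OF fin ind this] show False using cardB N_def by simp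
    qed
    then obtain t u where t: "finite t" "t \<subseteq> B" "(\<Sum>v\<in>t. qscale (u v) v) = 0" "\<exists>v\<in>t. u v \<noteq> 0"
      unfolding Q.dependent_explicit by blast
    define g where "g = the_inv_into {..N} (\<lambda>i. z ^ i)"
    have gz: "z ^ g v = v" if "v \<in> t" for v
    proof -
      have "v \<in> (\<lambda>i. z ^ i) ` {..N}" using t(2) that unfolding B_def by (rule subsetD)
      then obtain i where i: "i \<in> {..N}" "v = z ^ i" by (rule imageE)
      have "g v = i" unfolding g_def i(2) by (rule the_inv_into_f_f[OF True i(1)])
      then show ?thesis using i(2) by simp
    qed
    have ginj: "inj_on g t"
    proof (rule inj_onI)
      fix x y assume xy: "x \<in> t" "y \<in> t" "g x = g y"
      have "x = z ^ g x" using gz[OF xy(1)] by (rule sym)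
      also have "\<dots> = z ^ g y" using xy(3) by (rule arg_cong)
      also have "\<dots> = y" using gz[OF xy(2)] .
      finally show "x = y" .
    qed
    define p :: "complex poly" where "p = (\<Sum>v\<in>t. monom (of_rat (u v)) (g v))"
    have cp: "coeff p k = (\<Sum>v\<in>t. if g v = k then of_rat (u v) else 0)" for k
      by (simp add: p_def coeff_sum coeff_monom)
    have "coeff p k \<in> \<rat>" for k unfolding cp by (intro Rats_sum) auto
    moreover have "p \<noteq> 0"
    proof
      assume "p = 0"
      obtain v0 where v0: "v0 \<in> t" "u v0 \<noteq> 0" using t(4) by blast
      have "coeff p (g v0) = (\<Sum>v\<in>t. if v = v0 then of_rat (u v) else 0)"
      proof (unfold cp, intro sum.cong refl)
        fix v assume "v \<in> t"
        then have "g v = g v0 \<longleftrightarrow> v = v0" using ginj v0(1) unfolding inj_on_def by blast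
        then show "(if g v = g v0 then of_rat (u v) else 0) = (if v = v0 then of_rat (u v) else (0::complex))" by simp
      qed
      also have "\<dots> = of_rat (u v0)" using v0 t(1) by simp
      finally show False using \<open>p = 0\<close> v0 by simp
    qed
    moreover have "poly p z = 0"
    proof -
      have "poly p z = (\<Sum>v\<in>t. of_rat (u v) * z ^ g v)" by (simp add: p_def poly_sum poly_monom)
      also have "\<dots> = (\<Sum>v\<in>t. qscale (u v) v)" by (intro sum.cong refl) (simp add: gz qscale_def)
      finally show ?thesis using t(3) by simp
    qed
    ultimately show ?thesis by (intro algebraicI') auto
  qed
qed

lemma alg_pow_span:
  assumes "algebraic (x::complex)"
  shows "\<exists>m. \<forall>k. x ^ k \<in> Q.span ((\<lambda>i. x ^ i) ` {..<m})"
proof -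
  obtain p where p0: "\<And>i. coeff p i \<in> \<int>" "p \<noteq> 0" "poly p x = 0"
    using algebraicE[OF assms] by blast
  have p: "\<And>i. coeff p i \<in> \<rat>" "p \<noteq> 0" "poly p x = 0" using p0 Ints_subset_Rats by auto
  define m where "m = degree p"
  define c where "c = lead_coeff p"
  have c0: "c \<noteq> 0" using p(2) by (simp add: c_def)
  define r where "r i = (SOME q. of_rat q = - coeff p i / c)" for i
  have r: "of_rat (r i) = - coeff p i / c" for i
  proof -
    have rq: "- coeff p i / c \<in> \<rat>" using p(1) c_def by simp
    obtain q where "of_rat q = - coeff p i / c" using Rats_cases[OF rq] by metis
    then show ?thesis unfolding r_def by (rule someI)
  qed
  have "poly p x = (\<Sum>i<m. coeff p i * x ^ i) + c * x ^ m"
    by (simp add: poly_altdef m_def c_def lessThan_Suc_atMost[symmetric])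
  then have e1: "c * x ^ m = - (\<Sum>i<m. coeff p i * x ^ i)"
    using p(3) by (simp add: eq_neg_iff_add_eq_0 add.commute)
  have "(\<Sum>i<m. of_rat (r i) * x ^ i) = - (\<Sum>i<m. coeff p i * x ^ i) / c"
    by (simp add: r sum_divide_distrib sum_negf)
  also have "\<dots> = x ^ m" using c0 by (simp add: e1[symmetric])
  finally have xm: "x ^ m = (\<Sum>i<m. of_rat (r i) * x ^ i)" ..
  have "x ^ k \<in> Q.span ((\<lambda>i. x ^ i) ` {..<m})" for k
  proof (induction k rule: less_induct)
    case (less k)
    show ?case
    proof (cases "k < m")
      case True then show ?thesis by (intro Q.span_base) auto
    next
      case False
      have "x ^ k = x ^ (k - m) * x ^ m" using False by (simp add: power_add[symmetric])
      also have "\<dots> = (\<Sum>i<m. qscale (r i) (x ^ (k - m + i)))"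
        by (simp add: xm sum_distrib_left qscale_def power_add algebra_simps)
      also have "\<dots> \<in> Q.span ((\<lambda>i. x ^ i) ` {..<m})"
        using False by (intro Q.span_sum Q.span_scale less) auto
      finally show ?thesis .
    qed
  qed
  then show ?thesis by blast
qed

lemma algebraic_plus_mult:
  assumes x: "algebraic (x::complex)" and y: "algebraic y"
  shows "algebraic (x + y) \<and> algebraic (x * y)"
proof -
  obtain m where m: "\<And>k. x ^ k \<in> Q.span ((\<lambda>i. x ^ i) ` {..<m})" using alg_pow_span[OF x] by blast
  obtain n where n: "\<And>k. y ^ k \<in> Q.span ((\<lambda>i. y ^ i) ` {..<n})" using alg_pow_span[OF y] by blast
  define S where "S = (\<lambda>(i,j). x ^ i * y ^ j) ` ({..<m} \<times> {..<n})"
  have fin: "finite S" by (simp add: S_def)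
  have s1: "x ^ i * y ^ j \<in> Q.span S" if "j < n" for i j
  proof -
    have "y ^ j * x ^ i \<in> Q.span S"
    proof (rule Q_span_mult[OF m])
      fix a assume "a \<in> (\<lambda>i. x ^ i) ` {..<m}"
      then obtain i' where "i' < m" "a = x ^ i'" by auto
      then show "y ^ j * a \<in> Q.span S" using that
        by (intro Q.span_base) (auto simp: S_def image_iff mult.commute intro!: bexI[of _ "(i', j)"])
    qed
    then show ?thesis by (simp add: mult.commute)
  qed
  have s2: "x ^ i * y ^ j \<in> Q.span S" for i j
  proof (rule Q_span_mult[OF n])
    fix a assume "a \<in> (\<lambda>i. y ^ i) ` {..<n}"
    then obtain j' where "j' < n" "a = y ^ j'" by auto
    then show "x ^ i * a \<in> Q.span S" using s1 by simp
  qed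
  have one: "1 \<in> Q.span S" using s2[of 0 0] by simp
  have mem: "\<exists>i j. s = x ^ i * y ^ j" if "s \<in> S" for s using that by (auto simp: S_def)
  have "algebraic (x + y)"
  proof (rule alg_of_mult[OF fin one])
    fix s assume "s \<in> S"
    then obtain i j where s: "s = x ^ i * y ^ j" using mem by blast
    have "(x + y) * s = x ^ Suc i * y ^ j + x ^ i * y ^ Suc j" by (simp add: s algebra_simps)
    then show "(x + y) * s \<in> Q.span S" using Q.span_add[OF s2[of "Suc i" j] s2[of i "Suc j"]] by simp
  qed
  moreover have "algebraic (x * y)"
  proof (rule alg_of_mult[OF fin one])
    fix s assume "s \<in> S"
    then obtain i j where s: "s = x ^ i * y ^ j" using mem by blast
    have eq: "(x * y) * s = x ^ Suc i * y ^ Suc j" by (simp add: s algebra_simps)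
    show "(x * y) * s \<in> Q.span S" unfolding eq by (rule s2)
  qed
  ultimately show ?thesis ..
qed

lemma algebraic_add [intro]: "algebraic (x::complex) \<Longrightarrow> algebraic y \<Longrightarrow> algebraic (x + y)"
  using algebraic_plus_mult by blast
lemma algebraic_mult [intro]: "algebraic (x::complex) \<Longrightarrow> algebraic y \<Longrightarrow> algebraic (x * y)"
  using algebraic_plus_mult by blast
lemma algebraic_1 [simp, intro]: "algebraic (1::complex)"
  by (rule rat_imp_algebraic) simp
lemma algebraic_pow [intro]: "algebraic (x::complex) \<Longrightarrow> algebraic (x ^ n)"
  by (induction n) auto
lemma algebraic_diff [intro]: "algebraic (x::complex) \<Longrightarrow> algebraic (y::complex) \<Longrightarrow> algebraic (x - y)"
  using algebraic_add[of x "-y"] by auto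

lemma qbar_pCons: "qbar_poly (pCons a p) \<longleftrightarrow> algebraic a \<and> qbar_poly p"
  unfolding qbar_poly_def by (auto simp: coeff_pCons split: nat.splits)

lemma algebraic_poly [intro]: "qbar_poly p \<Longrightarrow> algebraic x \<Longrightarrow> algebraic (poly p x)"
  by (induction p rule: pCons_induct) (auto simp: qbar_pCons)

declare algebraic_add[simp] algebraic_mult[simp] algebraic_pow[simp] algebraic_poly[simp] algebraic_diff[simp]

locale av =
  fixes v :: "complex \<Rightarrow> real"
  assumes av: "abs_value_qbar v"
begin

lemma v_nonneg: "algebraic x \<Longrightarrow> 0 \<le> v x"
  using av unfolding abs_value_qbar_def by blast
lemma v_zero_iff: "algebraic x \<Longrightarrow> v x = 0 \<longleftrightarrow> x = 0"
  using av unfolding abs_value_qbar_def by blast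
lemma v_mult: "algebraic x \<Longrightarrow> algebraic y \<Longrightarrow> v (x * y) = v x * v y"
  using av unfolding abs_value_qbar_def by blast
lemma v_add: "algebraic x \<Longrightarrow> algebraic y \<Longrightarrow> v (x + y) \<le> v x + v y"
  using av unfolding abs_value_qbar_def by blast
lemma v_pos: "algebraic x \<Longrightarrow> x \<noteq> 0 \<Longrightarrow> 0 < v x"
  using v_nonneg v_zero_iff by force
lemma v_one: "v 1 = 1"
proof -
  have "v 1 = v 1 * v 1" using v_mult[of 1 1] by simp
  moreover have "v 1 > 0" by (rule v_pos) auto
  ultimately show ?thesis by simp
qed
lemma v_pow: "algebraic x \<Longrightarrow> v (x ^ n) = v x ^ n"
  by (induction n) (auto simp: v_one v_mult)
lemma v_minus_one: "v (-1) = 1"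
proof -
  have "v (-1) * v (-1) = 1" using v_mult[of "-1" "-1"] by (simp add: v_one)
  then have "v (-1) ^ 2 = 1" by (simp add: power2_eq_square)
  then have "v (-1) = 1 \<or> v (-1) = -1" by (simp add: power2_eq_1_iff)
  moreover have "v (-1) \<ge> 0" by (rule v_nonneg) auto
  ultimately show ?thesis by auto
qed
lemma v_uminus: "algebraic x \<Longrightarrow> v (- x) = v x"
  using v_mult[of "-1" x] by (simp add: v_minus_one)
lemma v_diff_ge: "algebraic x \<Longrightarrow> algebraic y \<Longrightarrow> v x - v y \<le> v (x + y)"
  using v_add[of "x + y" "- y"] by (auto simp: v_uminus)
lemma v_diff_ge': "algebraic x \<Longrightarrow> algebraic y \<Longrightarrow> v y - v x \<le> v (x + y)"
  using v_diff_ge[of y x] by (simp add: add.commute)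
lemma v_sum: "finite I \<Longrightarrow> (\<And>i. i \<in> I \<Longrightarrow> algebraic (f i)) \<Longrightarrow> v (sum f I) \<le> (\<Sum>i\<in>I. v (f i))"
proof (induction I rule: finite_induct)
  case empty then show ?case using v_zero_iff[of 0] by simp
next
  case (insert x F)
  have "algebraic (sum f F)" using insert(4) by (induction F rule: infinite_finite_induct) auto
  then have "v (sum f (insert x F)) \<le> v (f x) + v (sum f F)"
    using insert by (simp add: v_add)
  also have "\<dots> \<le> v (f x) + (\<Sum>i\<in>F. v (f i))" using insert by simp
  finally show ?case using insert by simp
qed

lemma poly_bound_small:
  assumes "qbar_poly p"
  shows "\<exists>K\<ge>0. \<forall>x. algebraic x \<longrightarrow> v x \<le> 1 \<longrightarrow> v (poly p x) \<le> K"
  using assms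
proof (induction p rule: pCons_induct)
  case 0 then show ?case using v_zero_iff[of 0] by auto
next
  case (pCons a p)
  then have a: "algebraic a" and qp: "qbar_poly p" by (auto simp: qbar_pCons)
  obtain K where K: "K \<ge> 0" "\<And>x. algebraic x \<Longrightarrow> v x \<le> 1 \<Longrightarrow> v (poly p x) \<le> K"
    using pCons(2)[OF qp] by blast
  show ?case
  proof (intro exI[of _ "v a + K"] conjI allI impI)
    show "0 \<le> v a + K" using K(1) v_nonneg[OF a] by simp
    fix x assume x: "algebraic x" "v x \<le> 1"
    have "v (poly (pCons a p) x) \<le> v a + v x * v (poly p x)"
      using v_add[of a "x * poly p x"] v_mult[of x "poly p x"] a x qp by auto
    also have "\<dots> \<le> v a + 1 * K"
      using x K v_nonneg[of x] v_nonneg[of "poly p x"] qp by (intro add_left_mono mult_mono) auto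
    finally show "v (poly (pCons a p) x) \<le> v a + K" by simp
  qed
qed

lemma poly_near0:
  assumes "qbar_poly p"
  shows "\<exists>K\<ge>0. \<forall>x. algebraic x \<longrightarrow> v x \<le> 1 \<longrightarrow> v (poly p 0) - K * v x \<le> v (poly p x)"
proof -
  obtain a q where p: "p = pCons a q" by (cases p) auto
  then have a: "algebraic a" and qp: "qbar_poly q" using assms by (auto simp: qbar_pCons)
  obtain K where K: "K \<ge> 0" "\<And>x. algebraic x \<Longrightarrow> v x \<le> 1 \<Longrightarrow> v (poly q x) \<le> K"
    using poly_bound_small[OF qp] by blast
  show ?thesis
  proof (intro exI[of _ K] conjI allI impI)
    show "K \<ge> 0" by fact
    fix x assume x: "algebraic x" "v x \<le> 1"
    have "v a - K * v x \<le> v a - v x * v (poly q x)"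
      using mult_left_mono[OF K(2)[OF x] v_nonneg[OF x(1)]] by (simp add: mult.commute)
    also have "\<dots> \<le> v (poly p x)"
      using v_diff_ge[of a "x * poly q x"] v_mult[of x "poly q x"] a x qp by (auto simp: p)
    finally show "v (poly p 0) - K * v x \<le> v (poly p x)" by (simp add: p)
  qed
qed

lemma poly_large:
  assumes "qbar_poly p" "p \<noteq> 0"
  shows "\<exists>c>0. \<exists>C>0. \<exists>R\<ge>1. \<forall>x. algebraic x \<longrightarrow> R \<le> v x \<longrightarrow>
     c * v x ^ degree p \<le> v (poly p x) \<and> v (poly p x) \<le> C * v x ^ degree p"
proof -
  define n where "n = degree p"
  define l where "l = coeff p n"
  have al: "algebraic (coeff p i)" for i using assms(1) unfolding qbar_poly_def by blast
  have l0: "v l > 0" using assms(2) al by (intro v_pos) (auto simp: l_def n_def)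
  define S where "S = (\<Sum>i<n. v (coeff p i))"
  have S0: "S \<ge> 0" unfolding S_def using al by (intro sum_nonneg v_nonneg)
  define R where "R = max 1 (2 * S / v l)"
  have "\<forall>x. algebraic x \<longrightarrow> R \<le> v x \<longrightarrow>
     v l / 2 * v x ^ degree p \<le> v (poly p x) \<and> v (poly p x) \<le> (S + v l) * v x ^ degree p"
  proof (intro allI impI conjI)
    fix x assume x: "algebraic x" "R \<le> v x"
    define t where "t = v x"
    have t1: "t \<ge> 1" using x by (simp add: R_def t_def)
    have tS: "2 * S / v l \<le> t" using x by (simp add: R_def t_def)
    have split: "poly p x = (\<Sum>i<n. coeff p i * x ^ i) + l * x ^ n"
      by (simp add: poly_altdef n_def l_def lessThan_Suc_atMost[symmetric])
    have alg_sum: "algebraic (\<Sum>i<n. coeff p i * x ^ i)"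
      using al x(1) by (induction n) auto
    have vs: "v (\<Sum>i<n. coeff p i * x ^ i) \<le> (\<Sum>i<n. v (coeff p i) * t ^ i)"
      using v_sum[of "{..<n}" "\<lambda>i. coeff p i * x ^ i"] al x(1) by (auto simp: v_mult v_pow t_def)
    have vln: "v (l * x ^ n) = v l * t ^ n" using al x(1) by (simp add: v_mult v_pow t_def l_def)
    have "(\<Sum>i<n. v (coeff p i) * t ^ i) \<le> (\<Sum>i<n. v (coeff p i) * t ^ n)"
      using t1 al by (intro sum_mono mult_left_mono power_increasing v_nonneg) auto
    then have up1: "(\<Sum>i<n. v (coeff p i) * t ^ i) \<le> S * t ^ n" by (simp add: S_def sum_distrib_right)
    have "t * (\<Sum>i<n. v (coeff p i) * t ^ i) = (\<Sum>i<n. v (coeff p i) * t ^ Suc i)"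
      by (simp add: sum_distrib_left algebra_simps)
    also have "\<dots> \<le> (\<Sum>i<n. v (coeff p i) * t ^ n)"
      using t1 al by (intro sum_mono mult_left_mono power_increasing v_nonneg) auto
    also have "\<dots> = S * t ^ n" by (simp add: S_def sum_distrib_right)
    also have "\<dots> \<le> (v l * t / 2) * t ^ n"
      using tS l0 t1 by (intro mult_right_mono) (auto simp: field_simps)
    finally have "t * (\<Sum>i<n. v (coeff p i) * t ^ i) \<le> t * (v l / 2 * t ^ n)" by (simp add: algebra_simps)
    then have low1: "(\<Sum>i<n. v (coeff p i) * t ^ i) \<le> v l / 2 * t ^ n" using t1 by simp
    have "v (poly p x) \<le> v (\<Sum>i<n. coeff p i * x ^ i) + v (l * x ^ n)"
      unfolding split using alg_sum al x(1) by (intro v_add) (auto simp: l_def)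
    also have "\<dots> \<le> S * t ^ n + v l * t ^ n" using vs up1 vln by simp
    finally show "v (poly p x) \<le> (S + v l) * v x ^ degree p" by (simp add: t_def n_def algebra_simps)
    have "v l * t ^ n - v l / 2 * t ^ n \<le> v (l * x ^ n) - v (\<Sum>i<n. coeff p i * x ^ i)"
      using vs low1 vln by simp
    also have "\<dots> \<le> v (poly p x)"
      unfolding split using alg_sum al x(1) by (intro v_diff_ge') (auto simp: l_def)
    finally show "v l / 2 * v x ^ degree p \<le> v (poly p x)" by (simp add: t_def n_def)
  qed
  moreover have "v l / 2 > 0" "S + v l > 0" "R \<ge> 1" using l0 S0 by (auto simp: R_def)
  ultimately show ?thesis by blast
qed

end

lemma real_step_lower:
  fixes \<alpha> \<beta> t e A' B' :: real
  assumes "0 \<le> \<alpha>" "0 \<le> \<beta>" "0 < t" "\<alpha> - t * \<beta> \<le> A'" "t * \<beta> - \<alpha> \<le> A'" "min \<alpha> \<beta> \<le> B'"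
    "0 \<le> e" "e \<le> 1/2" "e \<le> t / 2" "2 * t * e \<le> 1"
  shows "e * max \<alpha> \<beta> \<le> max A' B'"
proof -
  have ea: "e * \<alpha> \<le> \<alpha> / 2" using mult_right_mono[of e "1/2" \<alpha>] assms by simp
  have eb: "e * \<beta> \<le> t / 2 * \<beta>" using mult_right_mono[of e "t/2" \<beta>] assms by simp
  have tb: "0 \<le> t * \<beta>" using assms by simp
  consider "t * \<beta> \<le> \<alpha> / 2" | "\<alpha> \<le> t * \<beta> / 2" | "\<alpha> / 2 < t * \<beta>" "t * \<beta> / 2 < \<alpha>" by linarith
  then show ?thesis
  proof cases
    case 1
    then have "e * max \<alpha> \<beta> \<le> A'"
    proof (cases "\<beta> \<le> \<alpha>")
      case True
      then have "max \<alpha> \<beta> = \<alpha>" by simp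
      then show ?thesis using 1 ea eb assms tb by linarith
    next
      case False
      then have "max \<alpha> \<beta> = \<beta>" by simp
      then show ?thesis using 1 ea eb assms tb by linarith
    qed
    then show ?thesis by simp
  next
    case 2
    then have "e * max \<alpha> \<beta> \<le> A'"
    proof (cases "\<beta> \<le> \<alpha>")
      case True
      then have "max \<alpha> \<beta> = \<alpha>" by simp
      then show ?thesis using 2 ea eb assms tb by linarith
    next
      case False
      then have "max \<alpha> \<beta> = \<beta>" by simp
      then show ?thesis using 2 ea eb assms tb by linarith
    qed
    then show ?thesis by simp
  next
    case 3
    show ?thesis
    proof (cases "\<beta> \<le> \<alpha>")
      case True
      have "2 * t * (e * \<alpha>) \<le> \<alpha>" using mult_right_mono[OF assms(10) assms(1)] by (simp add: mult.assoc)
      also have "\<alpha> < 2 * t * \<beta>" using 3 by simp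
      finally have "e * \<alpha> < \<beta>" using assms(3) by (simp add: mult.assoc)
      moreover have "max \<alpha> \<beta> = \<alpha>" "min \<alpha> \<beta> = \<beta>" using True by auto
      ultimately show ?thesis using assms(6) by simp
    next
      case False
      have "max \<alpha> \<beta> = \<beta>" "min \<alpha> \<beta> = \<alpha>" using False by auto
      moreover have "e * \<beta> \<le> B'" using eb 3 assms(6) \<open>min \<alpha> \<beta> = \<alpha>\<close> by linarith
      ultimately show ?thesis by simp
    qed
  qed
qed

lemma max_power: "0 \<le> x \<Longrightarrow> 0 \<le> y \<Longrightarrow> max x y ^ n = max (x ^ n) (y ^ n)" for x y :: real
  by (cases "x \<le> y") (auto simp: max_def power_mono dest: power_mono[of x y n] intro: antisym)

lemma min_power: "0 \<le> x \<Longrightarrow> 0 \<le> y \<Longrightarrow> min x y ^ n = min (x ^ n) (y ^ n)" for x y :: real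
  by (cases "x \<le> y") (auto simp: min_def power_mono dest: power_mono[of x y n] intro: antisym)

context av
begin

lemma step_upper:
  assumes "algebraic a" "algebraic b" "algebraic lam" "d \<ge> 1"
  shows "max (v (a ^ d + lam * b ^ d)) (v (a * b ^ (d - 1))) \<le> (1 + v lam) * max (v a) (v b) ^ d"
proof -
  define M where "M = max (v a) (v b)"
  have va: "0 \<le> v a" "v a \<le> M" and vb: "0 \<le> v b" "v b \<le> M" using assms v_nonneg by (auto simp: M_def)
  have vl: "0 \<le> v lam" using assms v_nonneg by auto
  have "v (a ^ d + lam * b ^ d) \<le> v a ^ d + v lam * v b ^ d"
    using v_add[of "a^d" "lam * b^d"] assms by (simp add: v_mult v_pow)
  also have "\<dots> \<le> M ^ d + v lam * M ^ d"
    using va vb vl by (intro add_mono mult_left_mono power_mono) auto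
  finally have 1: "v (a ^ d + lam * b ^ d) \<le> (1 + v lam) * M ^ d" by (simp add: algebra_simps)
  have "v (a * b ^ (d - 1)) = v a * v b ^ (d - 1)" using assms by (simp add: v_mult v_pow)
  also have "\<dots> \<le> M * M ^ (d - 1)" using va vb by (intro mult_mono power_mono) auto
  also have "\<dots> = M ^ d" using assms(4) by (metis One_nat_def Suc_diff_Suc diff_zero le_numeral_extra(2) less_eq_Suc_le power_Suc)
  also have "\<dots> \<le> (1 + v lam) * M ^ d"
  proof -
    have "0 \<le> M ^ d" using va by simp
    then show ?thesis using mult_nonneg_nonneg[OF vl \<open>0 \<le> M ^ d\<close>] by (simp add: algebra_simps)
  qed
  finally show ?thesis using 1 by (simp add: M_def)
qed

lemma step_lower:
  assumes "algebraic a" "algebraic b" "algebraic lam" "lam \<noteq> 0" "d \<ge> 1"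
  shows "min 1 (min (v lam) (1 / v lam)) / 2 * max (v a) (v b) ^ d
         \<le> max (v (a ^ d + lam * b ^ d)) (v (a * b ^ (d - 1)))"
proof -
  define t where "t = v lam"
  have t0: "t > 0" using assms v_pos by (simp add: t_def)
  have va: "0 \<le> v a" and vb: "0 \<le> v b" using assms v_nonneg by auto
  define e where "e = min 1 (min t (1 / t)) / 2"
  have e: "0 \<le> e" "e \<le> 1/2" "e \<le> t/2" "2 * t * e \<le> 1"
  proof -
    show "0 \<le> e" "e \<le> 1/2" "e \<le> t/2" using t0 by (auto simp: e_def)
    have "2 * t * e \<le> 2 * t * (1 / t / 2)" using t0 by (intro mult_left_mono) (auto simp: e_def)
    then show "2 * t * e \<le> 1" using t0 by simp
  qed
  have A1: "v a ^ d - t * v b ^ d \<le> v (a ^ d + lam * b ^ d)"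
    using v_diff_ge[of "a^d" "lam * b^d"] assms by (simp add: v_mult v_pow t_def)
  have A2: "t * v b ^ d - v a ^ d \<le> v (a ^ d + lam * b ^ d)"
    using v_diff_ge'[of "a^d" "lam * b^d"] assms by (simp add: v_mult v_pow t_def)
  have "min (v a ^ d) (v b ^ d) = min (v a) (v b) * min (v a) (v b) ^ (d - 1)"
    using assms(5) va vb by (simp add: min_power[symmetric] power_Suc[symmetric])
  also have "\<dots> \<le> v a * v b ^ (d - 1)"
    using va vb by (intro mult_mono power_mono) auto
  also have "\<dots> = v (a * b ^ (d - 1))" using assms by (simp add: v_mult v_pow)
  finally have B: "min (v a ^ d) (v b ^ d) \<le> v (a * b ^ (d - 1))" .
  have "e * max (v a ^ d) (v b ^ d) \<le> max (v (a ^ d + lam * b ^ d)) (v (a * b ^ (d - 1)))"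
    by (rule real_step_lower[OF _ _ t0 A1 A2 B e]) (use va vb in auto)
  then show ?thesis using va vb by (simp add: max_power e_def t_def)
qed

lemma step_good:
  assumes "algebraic a" "algebraic b" "algebraic lam" "v lam * v b ^ d \<le> v a ^ d / 2"
  shows "v a ^ d / 2 \<le> v (a ^ d + lam * b ^ d) \<and> v (a ^ d + lam * b ^ d) \<le> 3 / 2 * v a ^ d"
proof
  show "v a ^ d / 2 \<le> v (a ^ d + lam * b ^ d)"
    using v_diff_ge[of "a^d" "lam * b^d"] assms by (simp add: v_mult v_pow)
  show "v (a ^ d + lam * b ^ d) \<le> 3 / 2 * v a ^ d"
    using v_add[of "a^d" "lam * b^d"] assms by (simp add: v_mult v_pow)
qed

end

lemma log_bound:
  fixes M M' Z :: real
  assumes "M > 0" "M' > 0" "Z > 0" "M ^ d / Z \<le> M'" "M' \<le> Z * M ^ d"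
  shows "\<bar>ln M' - real d * ln M\<bar> \<le> ln Z"
proof -
  have p: "M ^ d > 0" using assms by simp
  have "ln M' \<le> ln (Z * M ^ d)" using assms p by simp
  also have "\<dots> = ln Z + real d * ln M" using assms p by (simp add: ln_mult ln_realpow)
  finally have 1: "ln M' \<le> ln Z + real d * ln M" .
  have "ln (M ^ d / Z) \<le> ln M'" using assms p by simp
  moreover have "ln (M ^ d / Z) = real d * ln M - ln Z" using assms p by (simp add: ln_divide_pos ln_realpow)
  ultimately have 2: "real d * ln M - ln Z \<le> ln M'" by simp
  show ?thesis using 1 2 by linarith
qed

lemma sum_lemma:
  fixes M :: "nat \<Rightarrow> real" and K \<mu> \<rho> :: real and d :: nat
  assumes d: "d \<ge> 2" and \<rho>: "0 \<le> \<rho>" "\<rho> < d"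
    and b: "\<And>n. n \<ge> 1 \<Longrightarrow> \<bar>ln (M (Suc n)) - real d * ln (M n)\<bar> \<le> K + \<mu> * \<rho> ^ n"
  shows "\<exists>L. (\<lambda>n. ln (M n) / real d ^ n) \<longlonglongrightarrow> L \<and>
     \<bar>L - ln (M 2) / real d ^ 2\<bar> \<le> (\<Sum>j. (K + \<mu> * \<rho> ^ (j + 2)) / real d ^ (j + 3))"
proof -
  define f where "f n = ln (M n) / real d ^ n" for n
  define h where "h j = f (j + 3) - f (j + 2)" for j
  define B where "B j = (K + \<mu> * \<rho> ^ (j + 2)) / real d ^ (j + 3)" for j
  have dpos: "real d > 0" using d by simp
  have hB: "norm (h j) \<le> B j" for j
  proof -
    have "h j = (ln (M (Suc (j + 2))) - real d * ln (M (j + 2))) / real d ^ (j + 3)"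
      using dpos by (simp add: h_def f_def field_simps eval_nat_numeral)
    then have "norm (h j) = \<bar>ln (M (Suc (j + 2))) - real d * ln (M (j + 2))\<bar> / real d ^ (j + 3)"
      by simp
    also have "\<dots> \<le> B j" unfolding B_def using b[of "j + 2"] dpos by (intro divide_right_mono) auto
    finally show ?thesis .
  qed
  have sB: "summable B"
  proof -
    have e: "B = (\<lambda>j. K / real d ^ 3 * (1 / real d) ^ j + \<mu> * \<rho>^2 / real d ^ 3 * (\<rho> / real d) ^ j)"
    proof
      fix j
      have "B j = K / (real d ^ 3 * real d ^ j) + \<mu> * (\<rho> ^ 2 * \<rho> ^ j) / (real d ^ 3 * real d ^ j)"
        unfolding B_def by (simp add: add_divide_distrib power_add mult.commute power2_eq_square)
      also have "\<dots> = K / real d ^ 3 * (1 / real d) ^ j + \<mu> * \<rho>^2 / real d ^ 3 * (\<rho> / real d) ^ j"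
        by (simp add: power_divide)
      finally show "B j = \<dots>" .
    qed
    show ?thesis unfolding e using d \<rho> dpos
      by (intro summable_add summable_mult summable_geometric) auto
  qed
  have sh: "summable h" by (rule summable_comparison_test'[OF sB]) (use hB in auto)
  have fs: "f (j + 2) = f 2 + (\<Sum>i<j. h i)" for j
    by (induction j) (auto simp: h_def eval_nat_numeral)
  have "(\<lambda>j. f 2 + (\<Sum>i<j. h i)) \<longlonglongrightarrow> f 2 + suminf h"
    by (intro tendsto_add tendsto_const summable_LIMSEQ sh)
  then have "(\<lambda>j. f (j + 2)) \<longlonglongrightarrow> f 2 + suminf h" using fs by simp
  then have lim: "f \<longlonglongrightarrow> f 2 + suminf h" by (rule LIMSEQ_offset)
  have snh: "summable (\<lambda>j. norm (h j))" by (rule summable_comparison_test'[OF sB]) (use hB in auto)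
  have "norm (suminf h) \<le> (\<Sum>j. norm (h j))" by (rule summable_norm[OF snh])
  also have "\<dots> \<le> suminf B" by (rule suminf_le[OF hB snh sB])
  finally have "\<bar>(f 2 + suminf h) - f 2\<bar> \<le> suminf B" by simp
  then show ?thesis using lim unfolding f_def B_def by blast
qed

locale dyn = av +
  fixes d :: nat and lam :: complex and a b :: "nat \<Rightarrow> complex"
  assumes d2: "d \<ge> 2" and lamA: "algebraic lam" and lam0: "lam \<noteq> 0"
    and algA: "\<And>n. algebraic (a n)" and algB: "\<And>n. algebraic (b n)"
    and reca: "\<And>n. n \<ge> 1 \<Longrightarrow> a (Suc n) = a n ^ d + lam * b n ^ d"
    and recb: "\<And>n. n \<ge> 1 \<Longrightarrow> b (Suc n) = a n * b n ^ (d - 1)"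
    and nz1: "a 1 \<noteq> 0 \<or> b 1 \<noteq> 0"
begin

definition M where "M n = max (v (a n)) (v (b n))"

lemma t_pos: "v lam > 0" using v_pos[OF lamA lam0] .
lemma va0: "0 \<le> v (a n)" using v_nonneg[OF algA] .
lemma vb0: "0 \<le> v (b n)" using v_nonneg[OF algB] .
lemma M0: "0 \<le> M n" using va0[of n] by (simp add: M_def le_max_iff_disj)

lemma step_bounds:
  assumes "n \<ge> 1"
  shows "min 1 (min (v lam) (1 / v lam)) / 2 * M n ^ d \<le> M (Suc n) \<and> M (Suc n) \<le> (1 + v lam) * M n ^ d"
  using step_lower[OF algA[of n] algB[of n] lamA lam0, of d] step_upper[OF algA[of n] algB[of n] lamA, of d] d2 assms
  by (simp add: M_def reca recb)

lemma M_pos: "n \<ge> 1 \<Longrightarrow> M n > 0"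
proof (induction n rule: nat_induct_at_least)
  case base
  then show ?case using nz1 v_pos[OF algA, of 1] v_pos[OF algB, of 1] va0[of 1] vb0[of 1]
    by (auto simp: M_def max_def)
next
  case (Suc n)
  have "0 < min 1 (min (v lam) (1 / v lam)) / 2 * M n ^ d" using t_pos Suc by simp
  then show ?case using step_bounds[OF Suc(1)] by linarith
qed

definition Zg where "Zg = 2 * (v lam + 1 / v lam) + 2"

lemma gen_bound:
  assumes "n \<ge> 1"
  shows "M n ^ d / Zg \<le> M (Suc n) \<and> M (Suc n) \<le> Zg * M n ^ d"
proof
  define t where "t = v lam"
  have t0: "t > 0" using t_pos by (simp add: t_def)
  have "0 < 1 / t" using t0 by simp
  then have Z0: "Zg > 0" using t0 unfolding Zg_def t_def by (intro add_pos_pos mult_pos_pos) auto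
  have "1 / Zg \<le> min 1 (min t (1 / t)) / 2"
  proof (cases "t \<le> 1")
    case True
    have "t * t \<le> 1" using True t0 mult_le_one[of t t] by simp
    then have m: "min 1 (min t (1 / t)) = t" using t0 True by (auto simp: min_def field_simps)
    have "2 \<le> t * Zg" using t0 by (simp add: Zg_def t_def field_simps)
    then show ?thesis unfolding m using t0 Z0 by (simp add: field_simps)
  next
    case False
    have "1 < t * t" using False t0 by (metis less_1_mult not_le)
    then have m: "min 1 (min t (1 / t)) = 1 / t" using t0 False by (auto simp: min_def field_simps)
    have "2 * t \<le> Zg" using t0 by (simp add: Zg_def t_def field_simps)
    then show ?thesis unfolding m using t0 Z0 by (simp add: field_simps)
  qed
  then have "1 / Zg * M n ^ d \<le> min 1 (min t (1 / t)) / 2 * M n ^ d"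
    using M0[of n] by (intro mult_right_mono) auto
  then have "M n ^ d / Zg \<le> min 1 (min t (1 / t)) / 2 * M n ^ d" by simp
  then show "M n ^ d / Zg \<le> M (Suc n)" using step_bounds[OF assms, folded t_def] by linarith
  have "(1 + t) * M n ^ d \<le> Zg * M n ^ d"
    using t0 M0[of n] by (intro mult_right_mono) (auto simp: Zg_def t_def field_simps)
  then show "M (Suc n) \<le> Zg * M n ^ d" using step_bounds[OF assms, folded t_def] by linarith
qed


lemma pow_pred: "d \<ge> 1 \<Longrightarrow> (x::real) * x ^ (d - 1) = x ^ d"
  by (cases d) auto

lemma regime_small:
  assumes t12: "v lam \<le> 1/2" and W: "W \<ge> 2"
    and base: "v (b 1) \<le> exp (W * (real d - 1/2)) * v (a 1)"
    and n: "n \<ge> 1"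
  shows "M n ^ d / (4 * exp (W * (real d - 1/2) ^ n) ^ d) \<le> M (Suc n) \<and>
         M (Suc n) \<le> (4 * exp (W * (real d - 1/2) ^ n) ^ d) * M n ^ d"
proof -
  define \<rho> where "\<rho> = real d - 1/2"
  define E where "E k = exp (W * \<rho> ^ k)" for k
  define t where "t = v lam"
  have t0: "t > 0" using t_pos by (simp add: t_def)
  have \<rho>1: "\<rho> \<ge> 1" using d2 by (simp add: \<rho>_def)
  have Wr: "W * \<rho> ^ k \<ge> 2" for k
  proof -
    have "1 \<le> \<rho> ^ k" using \<rho>1 by (rule one_le_power)
    then show ?thesis using W mult_mono[of 2 W 1 "\<rho> ^ k"] by simp
  qed
  have E1: "E k \<ge> 1" for k using Wr[of k] by (simp add: E_def)
  have Emono: "E k \<le> E (Suc k)" for k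
  proof -
    have "\<rho> ^ k \<le> \<rho> ^ Suc k" using \<rho>1 by (intro power_increasing) auto
    then have "W * \<rho> ^ k \<le> W * \<rho> ^ Suc k" using W by (intro mult_left_mono) auto
    then show ?thesis by (simp add: E_def)
  qed
  have Estep: "2 * E k ^ (d - 1) \<le> E (Suc k)" for k
  proof -
    have e1: "E k ^ (d - 1) = exp (real (d - 1) * (W * \<rho> ^ k))" by (simp add: E_def exp_of_nat_mult)
    have rd: "\<rho> = real (d - 1) + 1/2" using d2 by (simp add: \<rho>_def of_nat_diff)
    have "W * \<rho> ^ Suc k = W * \<rho> ^ k * \<rho>" by simp
    also have "\<dots> = real (d - 1) * (W * \<rho> ^ k) + W * \<rho> ^ k / 2"
      unfolding rd[of ] by (simp only: ring_distribs) simp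
    finally have "W * \<rho> ^ Suc k = real (d - 1) * (W * \<rho> ^ k) + W * \<rho> ^ k / 2" .
    moreover have "ln 2 < W * \<rho> ^ k / 2" using Wr[of k] ln_2_less_1 by linarith
    ultimately have "ln 2 + real (d - 1) * (W * \<rho> ^ k) \<le> W * \<rho> ^ Suc k" by linarith
    then have le: "exp (ln 2 + real (d - 1) * (W * \<rho> ^ k)) \<le> E (Suc k)" by (simp add: E_def)
    have "2 * E k ^ (d - 1) = exp (ln 2 + real (d - 1) * (W * \<rho> ^ k))"
      by (simp only: e1 exp_add) simp
    then show ?thesis using le by linarith
  qed
  have inv: "t * E k ^ d \<le> 1/2 \<Longrightarrow> v (b k) \<le> E k * v (a k)" if "k \<ge> 1" for k
    using that
  proof (induction k rule: nat_induct_at_least)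
    case base
    then show ?case using assms(3) by (simp add: E_def \<rho>_def)
  next
    case (Suc k)
    have "t * E k ^ d \<le> t * E (Suc k) ^ d"
      using t0 Emono[of k] E1[of k] by (intro mult_left_mono power_mono) auto
    then have ck: "t * E k ^ d \<le> 1/2" using Suc(3) by linarith
    have IH: "v (b k) \<le> E k * v (a k)" using Suc(2)[OF ck] .
    have "t * v (b k) ^ d \<le> t * (E k * v (a k)) ^ d"
      using IH vb0[of k] t0 by (intro mult_left_mono power_mono) auto
    also have "\<dots> = (t * E k ^ d) * v (a k) ^ d" by (simp add: power_mult_distrib)
    also have "\<dots> \<le> 1/2 * v (a k) ^ d" using ck va0[of k] by (intro mult_right_mono) auto
    finally have good: "v lam * v (b k) ^ d \<le> v (a k) ^ d / 2" by (simp add: t_def)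
    have ga: "v (a k) ^ d / 2 \<le> v (a (Suc k))"
      using step_good[OF algA[of k] algB[of k] lamA good] reca[OF Suc(1)] by simp
    have "v (b (Suc k)) = v (a k) * v (b k) ^ (d - 1)"
      using recb[OF Suc(1)] algA[of k] algB[of k] by (simp add: v_mult v_pow)
    also have "\<dots> \<le> v (a k) * (E k * v (a k)) ^ (d - 1)"
      using IH vb0[of k] va0[of k] by (intro mult_left_mono power_mono) auto
    also have "\<dots> = E k ^ (d - 1) * (v (a k) * v (a k) ^ (d - 1))" by (simp add: power_mult_distrib)
    also have "\<dots> = E k ^ (d - 1) * v (a k) ^ d" using d2 pow_pred[of "v (a k)"] by simp
    also have "\<dots> \<le> E k ^ (d - 1) * (2 * v (a (Suc k)))"
      using ga E1[of k] by (intro mult_left_mono) auto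
    also have "\<dots> = (2 * E k ^ (d - 1)) * v (a (Suc k))" by simp
    also have "\<dots> \<le> E (Suc k) * v (a (Suc k))"
      using Estep[of k] va0[of "Suc k"] by (intro mult_right_mono) auto
    finally show ?case .
  qed
  define Z where "Z = 4 * E n ^ d"
  have EnZ: "E n ^ d \<ge> 1" using E1[of n] by (simp add: one_le_power)
  have Z4: "Z \<ge> 4" using EnZ by (simp add: Z_def)
  have Md0: "0 \<le> M n ^ d" using M0[of n] by simp
  have up: "M (Suc n) \<le> Z * M n ^ d"
  proof -
    have "M (Suc n) \<le> (1 + t) * M n ^ d" using step_bounds[OF n] by (simp add: t_def)
    also have "\<dots> \<le> Z * M n ^ d" using t12 Z4 Md0 by (intro mult_right_mono) (auto simp: t_def)
    finally show ?thesis .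
  qed
  have low: "M n ^ d / Z \<le> M (Suc n)"
  proof (cases "t * E n ^ d \<le> 1/2")
    case True
    have IH: "v (b n) \<le> E n * v (a n)" using inv[OF n True] .
    have "v (a n) \<le> E n * v (a n)" using E1[of n] va0[of n] mult_right_mono[of 1 "E n" "v (a n)"] by simp
    then have "M n \<le> E n * v (a n)" using IH by (simp add: M_def)
    then have "M n ^ d \<le> (E n * v (a n)) ^ d" using M0[of n] by (intro power_mono) auto
    then have "M n ^ d / Z \<le> E n ^ d * v (a n) ^ d / Z" using Z4 by (simp add: power_mult_distrib divide_right_mono)
    also have "\<dots> = v (a n) ^ d / 4" using E1[of n] by (simp add: Z_def)
    also have "\<dots> \<le> v (a n) ^ d / 2" using va0[of n] by simp
    also have "\<dots> \<le> v (a (Suc n))"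
    proof -
      have "t * v (b n) ^ d \<le> t * (E n * v (a n)) ^ d"
        using IH vb0[of n] t0 by (intro mult_left_mono power_mono) auto
      also have "\<dots> = (t * E n ^ d) * v (a n) ^ d" by (simp add: power_mult_distrib)
      also have "\<dots> \<le> 1/2 * v (a n) ^ d" using True va0[of n] by (intro mult_right_mono) auto
      finally have good: "v lam * v (b n) ^ d \<le> v (a n) ^ d / 2" by (simp add: t_def)
      show ?thesis using step_good[OF algA[of n] algB[of n] lamA good] reca[OF n] by simp
    qed
    also have "\<dots> \<le> M (Suc n)" by (simp add: M_def)
    finally show ?thesis .
  next
    case False
    have "t * t \<le> 1" using t12 t0 mult_le_one[of t t] by (simp add: t_def)
    then have m: "min 1 (min t (1 / t)) = t" using t0 t12 by (auto simp: min_def field_simps t_def)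
    have "1 / Z \<le> t / 2" using False Z4 by (simp add: Z_def field_simps)
    then have "1 / Z * M n ^ d \<le> t / 2 * M n ^ d" by (rule mult_right_mono[OF _ Md0])
    then have "M n ^ d / Z \<le> t / 2 * M n ^ d" by simp
    also have "\<dots> \<le> M (Suc n)" using step_bounds[OF n, folded t_def, unfolded m] by linarith
    finally show ?thesis .
  qed
  show ?thesis using up low by (simp add: Z_def E_def \<rho>_def)
qed

lemma regime_large:
  assumes t1: "v lam \<ge> 1" and K1: "K1 \<ge> 1"
    and base: "v lam ^ 2 * v (b 1) ^ d \<le> K1 * v (a 1) ^ d"
    and n: "n \<ge> 1"
  shows "M n ^ d / (4 * K1 * 2 ^ (d * (n - 1))) \<le> M (Suc n) \<and>
         M (Suc n) \<le> (4 * K1 * 2 ^ (d * (n - 1))) * M n ^ d"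
proof -
  define t where "t = v lam"
  have t0: "t > 0" and t1': "t \<ge> 1" using t1 by (auto simp: t_def)
  define Q where "Q k = 2 ^ (d * (k - 1)) * K1 / t" for k :: nat
  have Q0: "Q k \<ge> 0" for k using K1 t0 by (simp add: Q_def)
  have Qsuc: "Q (Suc k) = 2 ^ d * Q k" if "k \<ge> 1" for k
  proof -
    have "d * (Suc k - 1) = d + d * (k - 1)" using that by (cases k) auto
    then show ?thesis by (simp add: Q_def power_add)
  qed
  have inv: "2 ^ (d * (k - 1)) * K1 \<le> t / 2 \<Longrightarrow> t * v (b k) ^ d \<le> Q k * v (a k) ^ d"
    if "k \<ge> 1" for k
    using that
  proof (induction k rule: nat_induct_at_least)
    case base
    have "t * (t * v (b 1) ^ d) \<le> K1 * v (a 1) ^ d" using assms(3) by (simp add: t_def power2_eq_square mult.assoc)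
    then show ?case using t0 by (simp add: Q_def field_simps)
  next
    case (Suc k)
    have "(2::real) ^ (d * (k - 1)) \<le> 2 ^ (d * (Suc k - 1))" by (intro power_increasing) auto
    then have ck: "2 ^ (d * (k - 1)) * K1 \<le> t / 2" using Suc(3) K1 mult_right_mono[of "(2::real) ^ (d * (k - 1))" "2 ^ (d * (Suc k - 1))" K1] by linarith
    have IH: "t * v (b k) ^ d \<le> Q k * v (a k) ^ d" using Suc(2)[OF ck] .
    have Qk: "Q k \<le> 1/2" using ck t0 by (simp add: Q_def field_simps)
    have "t * v (b k) ^ d \<le> 1/2 * v (a k) ^ d"
      using IH Qk va0[of k] mult_right_mono[of "Q k" "1/2" "v (a k) ^ d"] by simp
    then have good: "v lam * v (b k) ^ d \<le> v (a k) ^ d / 2" by (simp add: t_def)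
    have ga: "v (a k) ^ d / 2 \<le> v (a (Suc k))"
      using step_good[OF algA[of k] algB[of k] lamA good] reca[OF Suc(1)] by simp
    have X0: "0 \<le> t * v (b k) ^ d" using t0 vb0[of k] by simp
    have "(t * v (b k) ^ d) ^ (d - 1) \<le> (Q k * v (a k) ^ d) ^ (d - 1)"
      using IH X0 by (intro power_mono) auto
    then have k1: "t ^ (d - 1) * v (b k) ^ (d * (d - 1)) \<le> Q k ^ (d - 1) * v (a k) ^ (d * (d - 1))"
      by (simp add: power_mult_distrib power_mult)
    have tt: "t \<le> t ^ (d - 1)" using t1' d2 power_increasing[of 1 "d - 1" t] by simp
    have qq: "Q k ^ (d - 1) \<le> Q k" using Qk Q0[of k] d2 power_decreasing[of 1 "d - 1" "Q k"] by simp
    have "t * v (b k) ^ (d * (d - 1)) \<le> t ^ (d - 1) * v (b k) ^ (d * (d - 1))"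
      using tt vb0[of k] by (intro mult_right_mono) auto
    also have "\<dots> \<le> Q k ^ (d - 1) * v (a k) ^ (d * (d - 1))" by (rule k1)
    also have "\<dots> \<le> Q k * v (a k) ^ (d * (d - 1))" using qq va0[of k] by (intro mult_right_mono) auto
    finally have key: "t * v (b k) ^ (d * (d - 1)) \<le> Q k * v (a k) ^ (d * (d - 1))" .
    have vbs: "v (b (Suc k)) ^ d = v (a k) ^ d * v (b k) ^ (d * (d - 1))"
      using recb[OF Suc(1)] algA[of k] algB[of k]
      by (simp add: v_mult v_pow power_mult_distrib power_mult[symmetric] mult.commute)
    have dd: "d + d * (d - 1) = d * d" using d2 by (cases d) auto
    have "t * v (b (Suc k)) ^ d = v (a k) ^ d * (t * v (b k) ^ (d * (d - 1)))" by (simp add: vbs)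
    also have "\<dots> \<le> v (a k) ^ d * (Q k * v (a k) ^ (d * (d - 1)))"
      using key va0[of k] by (intro mult_left_mono) auto
    also have "\<dots> = Q k * v (a k) ^ (d * d)" by (simp add: dd[symmetric] power_add)
    also have "\<dots> = Q k * 2 ^ d * (v (a k) ^ d / 2) ^ d" by (simp add: power_mult power_divide)
    also have "\<dots> \<le> Q k * 2 ^ d * v (a (Suc k)) ^ d"
      using ga va0[of k] Q0[of k] by (intro mult_left_mono power_mono) auto
    also have "\<dots> = Q (Suc k) * v (a (Suc k)) ^ d" using Qsuc[OF Suc(1)] by simp
    finally show ?case .
  qed
  define Z where "Z = 4 * K1 * 2 ^ (d * (n - 1))"
  have p1: "1 \<le> (2::real) ^ (d * (n - 1))" by (rule one_le_power) simp
  have "1 * 1 \<le> K1 * (2::real) ^ (d * (n - 1))" using K1 p1 by (intro mult_mono) auto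
  then have Z4: "Z \<ge> 4" by (simp add: Z_def mult.assoc)
  have Md0: "0 \<le> M n ^ d" using M0[of n] by simp
  have vaM: "v (a n) \<le> M n" and vbM: "v (b n) \<le> M n" by (auto simp: M_def)
  show ?thesis
  proof (cases "2 ^ (d * (n - 1)) * K1 \<le> t / 2")
    case True
    have IH: "t * v (b n) ^ d \<le> Q n * v (a n) ^ d" using inv[OF n True] .
    have Qn: "Q n \<le> 1/2" using True t0 by (simp add: Q_def field_simps)
    have "t * v (b n) ^ d \<le> 1/2 * v (a n) ^ d"
      using IH Qn va0[of n] mult_right_mono[of "Q n" "1/2" "v (a n) ^ d"] by simp
    then have good: "v lam * v (b n) ^ d \<le> v (a n) ^ d / 2" by (simp add: t_def)
    have ga: "v (a n) ^ d / 2 \<le> v (a (Suc n))" and ga': "v (a (Suc n)) \<le> 3 / 2 * v (a n) ^ d"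
      using step_good[OF algA[of n] algB[of n] lamA good] reca[OF n] by simp_all
    have "v (b n) ^ d \<le> t * v (b n) ^ d" using t1' vb0[of n] mult_right_mono[of 1 t "v (b n) ^ d"] by simp
    moreover have "0 \<le> v lam * v (b n) ^ d" using t0 vb0[of n] by (simp add: t_def)
    ultimately have "v (b n) ^ d \<le> v (a n) ^ d" using good unfolding t_def by linarith
    then have Md: "M n ^ d = v (a n) ^ d" using va0[of n] vb0[of n] by (simp add: M_def max_power max_absorb1)
    have "M n ^ d / Z \<le> M n ^ d / 2" using Z4 Md0 by (intro divide_left_mono) auto
    also have "\<dots> = v (a n) ^ d / 2" by (simp only: Md)
    also have "\<dots> \<le> v (a (Suc n))" by (rule ga)
    also have "\<dots> \<le> M (Suc n)" by (simp add: M_def)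
    finally have low: "M n ^ d / Z \<le> M (Suc n)" .
    have "v (b (Suc n)) = v (a n) * v (b n) ^ (d - 1)"
      using recb[OF n] algA[of n] algB[of n] by (simp add: v_mult v_pow)
    also have "\<dots> \<le> M n * M n ^ (d - 1)" using vaM vbM vb0[of n] M0[of n] by (intro mult_mono power_mono) auto
    also have "\<dots> = M n ^ d" using d2 pow_pred[of "M n"] by simp
    finally have vb': "v (b (Suc n)) \<le> M n ^ d" .
    have "3 / 2 * M n ^ d \<le> Z * M n ^ d" using Z4 Md0 by (intro mult_right_mono) auto
    moreover have "v (a (Suc n)) \<le> 3 / 2 * M n ^ d" using ga' Md by simp
    ultimately have up: "M (Suc n) \<le> Z * M n ^ d" using vb' Md0 Z4 unfolding M_def[of "Suc n"] by auto
    show ?thesis using low up by (simp add: Z_def)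
  next
    case False
    then have tZ: "2 * t \<le> Z" by (simp add: Z_def mult.commute mult.left_commute)
    have i1: "1 / t \<le> 1" using t1' by simp
    then have i2: "1 / t \<le> t" using t1' by linarith
    have m: "min 1 (min t (1 / t)) = 1 / t" using i1 i2 by (simp add: min_absorb2)
    have "1 / Z \<le> 1 / t / 2" using tZ t0 by (simp add: field_simps)
    then have "1 / Z * M n ^ d \<le> 1 / t / 2 * M n ^ d" by (rule mult_right_mono[OF _ Md0])
    then have "M n ^ d / Z \<le> 1 / t / 2 * M n ^ d" by simp
    also have "\<dots> \<le> M (Suc n)" using step_bounds[OF n, folded t_def, unfolded m] by linarith
    finally have low: "M n ^ d / Z \<le> M (Suc n)" .
    have "(1 + t) * M n ^ d \<le> Z * M n ^ d" using tZ t1' Md0 by (intro mult_right_mono) auto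
    then have up: "M (Suc n) \<le> Z * M n ^ d" using step_bounds[OF n, folded t_def] by linarith
    show ?thesis using low up by (simp add: Z_def)
  qed
qed
end

lemma asym_real:
  fixes t \<alpha> \<beta> cA CA cB CB P :: real and p q d :: nat
  assumes t1: "t \<ge> 1" and d2: "d \<ge> 2" and cA: "0 < cA" and cB: "0 < cB"
    and \<alpha>: "cA * t ^ p \<le> \<alpha>" "\<alpha> \<le> CA * t ^ p"
    and \<beta>: "cB * t ^ q \<le> \<beta>" "\<beta> \<le> CB * t ^ q"
    and tA: "2 * CB ^ d / cA ^ d \<le> t" and tB: "2 * CA ^ d / cB ^ d \<le> t"
    and P1: "\<alpha> ^ d - t * \<beta> ^ d \<le> P" and P2: "t * \<beta> ^ d - \<alpha> ^ d \<le> P"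
  shows "t ^ 2 * (\<alpha> * \<beta> ^ (d - 1)) ^ d \<le>
    max ((CA * CB ^ (d - 1)) ^ d / (cA ^ d / 2) ^ d) ((CA * CB ^ (d - 1)) ^ d / (cB ^ d / 2) ^ d) * P ^ d"
proof -
  have t0: "t > 0" using t1 by simp
  have "0 \<le> cA * t ^ p" using cA t0 by simp
  then have a0: "0 \<le> \<alpha>" using \<alpha>(1) by linarith
  have "0 \<le> cB * t ^ q" using cB t0 by simp
  then have b0: "0 \<le> \<beta>" using \<beta>(1) by linarith
  have "0 \<le> CA * t ^ p" using a0 \<alpha>(2) by linarith
  then have CA0: "0 \<le> CA" using zero_less_power[OF t0, of p] by (auto simp: zero_le_mult_iff)
  have "0 \<le> CB * t ^ q" using b0 \<beta>(2) by linarith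
  then have CB0: "0 \<le> CB" using zero_less_power[OF t0, of q] by (auto simp: zero_le_mult_iff)
  define G where "G = (CA * CB ^ (d - 1)) ^ d"
  define E1 where "E1 = 2 + d * (p + q * (d - 1))"
  have G0: "0 \<le> G" using CA0 CB0 by (simp add: G_def)
  have L: "t ^ 2 * (\<alpha> * \<beta> ^ (d - 1)) ^ d \<le> G * t ^ E1"
  proof -
    have "\<alpha> * \<beta> ^ (d - 1) \<le> CA * t ^ p * (CB * t ^ q) ^ (d - 1)"
      using \<alpha> \<beta> a0 b0 CA0 by (intro mult_mono power_mono) auto
    also have "\<dots> = CA * CB ^ (d - 1) * t ^ (p + q * (d - 1))"
      by (simp add: power_mult_distrib power_add power_mult)
    finally have "(\<alpha> * \<beta> ^ (d - 1)) ^ d \<le> (CA * CB ^ (d - 1) * t ^ (p + q * (d - 1))) ^ d"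
      using a0 b0 by (intro power_mono) auto
    also have "\<dots> = G * t ^ (d * (p + q * (d - 1)))"
      by (simp add: G_def power_mult_distrib power_mult[symmetric] mult_ac)
    finally have "t ^ 2 * (\<alpha> * \<beta> ^ (d - 1)) ^ d \<le> t ^ 2 * (G * t ^ (d * (p + q * (d - 1))))"
      using t0 by (intro mult_left_mono) auto
    then show ?thesis by (simp add: E1_def power_add power2_eq_square mult_ac)
  qed
  define K where "K = max (G / (cA ^ d / 2) ^ d) (G / (cB ^ d / 2) ^ d)"
  have fin: "t ^ 2 * (\<alpha> * \<beta> ^ (d - 1)) ^ d \<le> K * P ^ d"
    if c: "c > 0" "G / c ^ d \<le> K" and e: "E1 \<le> d * e" and Pc: "c * t ^ e \<le> P" for c e
  proof -
    have "c ^ d * t ^ (d * e) = (c * t ^ e) ^ d" by (simp add: power_mult_distrib power_mult[symmetric] mult_ac)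
    also have "\<dots> \<le> P ^ d" using Pc c t0 by (intro power_mono) auto
    finally have cP: "c ^ d * t ^ (d * e) \<le> P ^ d" .
    have "G * t ^ E1 \<le> G * t ^ (d * e)" using G0 t1 e by (intro mult_left_mono power_increasing) auto
    also have "\<dots> = G / c ^ d * (c ^ d * t ^ (d * e))" using c by simp
    also have "\<dots> \<le> G / c ^ d * P ^ d" using cP G0 c by (intro mult_left_mono) auto
    also have "\<dots> \<le> K * P ^ d"
    proof -
      have "0 \<le> c ^ d * t ^ (d * e)" using c t0 by simp
      then have "0 \<le> P ^ d" using cP by linarith
      then show ?thesis using c(2) by (intro mult_right_mono) auto
    qed
    finally show ?thesis using L by linarith
  qed
  show ?thesis
  proof (cases "q < p")
    case True
    have e: "E1 \<le> d * (d * p)"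
    proof -
      obtain k where k: "d = Suc (Suc k)" using d2 by (metis add_2_eq_Suc le_Suc_ex)
      obtain s where s: "p = Suc (q + s)" using True by (metis less_iff_Suc_add add.commute)
      show ?thesis unfolding E1_def k s by (simp add: algebra_simps)
    qed
    have ad: "cA ^ d * t ^ (d * p) \<le> \<alpha> ^ d"
    proof -
      have "(cA * t ^ p) ^ d \<le> \<alpha> ^ d" using \<alpha>(1) cA t0 by (intro power_mono) auto
      then show ?thesis by (simp add: power_mult_distrib power_mult[symmetric] mult_ac)
    qed
    have bd: "t * \<beta> ^ d \<le> CB ^ d * t ^ (d * q + 1)"
    proof -
      have "\<beta> ^ d \<le> (CB * t ^ q) ^ d" using \<beta>(2) b0 by (intro power_mono) auto
      then have "t * \<beta> ^ d \<le> t * (CB * t ^ q) ^ d" using t0 by (intro mult_left_mono) auto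
      then show ?thesis by (simp add: power_mult_distrib power_mult[symmetric] mult_ac)
    qed
    have ex: "t * t ^ (d * q + 1) \<le> t ^ (d * p)"
    proof -
      have "d * q + 2 \<le> d * p"
      proof -
        have "d * q + d \<le> d * p" using True by (metis Suc_leI mult_Suc_right add.commute mult_le_mono2)
        then show ?thesis using d2 by linarith
      qed
      then have "t ^ (d * q + 2) \<le> t ^ (d * p)" using t1 by (intro power_increasing) auto
      then show ?thesis by (simp add: power_add power2_eq_square mult.commute mult.left_commute)
    qed
    have CBle: "CB ^ d \<le> cA ^ d * t / 2" using tA cA by (simp add: field_simps)
    have "CB ^ d * t ^ (d * q + 1) \<le> cA ^ d * t / 2 * t ^ (d * q + 1)"
      using CBle t0 by (intro mult_right_mono) auto
    also have "\<dots> = cA ^ d / 2 * (t * t ^ (d * q + 1))" by simp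
    also have "\<dots> \<le> cA ^ d / 2 * t ^ (d * p)" using ex cA by (intro mult_left_mono) auto
    finally have "cA ^ d / 2 * t ^ (d * p) \<le> P" using ad bd P1 by linarith
    moreover have "G / (cA ^ d / 2) ^ d \<le> K" by (simp add: K_def)
    ultimately have "t ^ 2 * (\<alpha> * \<beta> ^ (d - 1)) ^ d \<le> K * P ^ d" using fin[of "cA ^ d / 2" "d * p"] e cA by simp
    then show ?thesis by (simp only: K_def G_def)
  next
    case False
    have e: "E1 \<le> d * (d * q + 1)"
    proof -
      obtain k where k: "d = Suc (Suc k)" using d2 by (metis add_2_eq_Suc le_Suc_ex)
      obtain s where s: "q = p + s" using False by (metis le_Suc_ex not_less)
      show ?thesis unfolding E1_def k s by (simp add: algebra_simps)
    qed
    have bd: "cB ^ d * t ^ (d * q + 1) \<le> t * \<beta> ^ d"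
    proof -
      have "(cB * t ^ q) ^ d \<le> \<beta> ^ d" using \<beta>(1) cB t0 by (intro power_mono) auto
      then have "t * (cB * t ^ q) ^ d \<le> t * \<beta> ^ d" using t0 by (intro mult_left_mono) auto
      then show ?thesis by (simp add: power_mult_distrib power_mult[symmetric] mult_ac)
    qed
    have ad: "\<alpha> ^ d \<le> CA ^ d * t ^ (d * q)"
    proof -
      have "\<alpha> ^ d \<le> (CA * t ^ p) ^ d" using \<alpha>(2) a0 by (intro power_mono) auto
      also have "\<dots> = CA ^ d * t ^ (d * p)" by (simp add: power_mult_distrib power_mult[symmetric] mult_ac)
      also have "\<dots> \<le> CA ^ d * t ^ (d * q)" using False t1 CA0 by (intro mult_left_mono power_increasing) auto
      finally show ?thesis .
    qed
    have CAle: "CA ^ d \<le> cB ^ d * t / 2" using tB cB by (simp add: field_simps)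
    have "CA ^ d * t ^ (d * q) \<le> cB ^ d * t / 2 * t ^ (d * q)"
      using CAle t0 by (intro mult_right_mono) auto
    also have "\<dots> = cB ^ d / 2 * t ^ (d * q + 1)" by (simp add: power_add mult.commute mult.left_commute)
    finally have "cB ^ d / 2 * t ^ (d * q + 1) \<le> P" using ad bd P2 by linarith
    moreover have "G / (cB ^ d / 2) ^ d \<le> K" by (simp add: K_def)
    ultimately have "t ^ 2 * (\<alpha> * \<beta> ^ (d - 1)) ^ d \<le> K * P ^ d" using fin[of "cB ^ d / 2" "d * q + 1"] e cB by simp
    then show ?thesis by (simp only: K_def G_def)
  qed
qed

lemma ABc_one: "ABc d A B 1 = (if poly A 0 \<noteq> 0
      then (A ^ d + [:0, 1:] * B ^ d, A * B ^ (d - 1))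
      else ((A ^ d + [:0, 1:] * B ^ d) div [:0, 1:], (A * B ^ (d - 1)) div [:0, 1:]))"
  by (metis One_nat_def ABc.simps(2))

lemma lev1_nodiv: "poly A 0 \<noteq> 0 \<Longrightarrow> Acn d A B 1 = A ^ d + [:0,1:] * B ^ d \<and> Bcn d A B 1 = A * B ^ (d - 1)"
  unfolding Acn_def Bcn_def ABc_one by simp

lemma lev1_div:
  assumes "A = pCons 0 A'" "d \<ge> 1"
  shows "Acn d A B 1 = [:0,1:] ^ (d - 1) * A' ^ d + B ^ d \<and> Bcn d A B 1 = A' * B ^ (d - 1)"
proof -
  have A: "A = [:0,1:] * A'" using assms(1) by simp
  have e1: "A ^ d + [:0,1:] * B ^ d = [:0,1:] * ([:0,1:] ^ (d - 1) * A' ^ d + B ^ d)"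
  proof -
    have "A ^ d = [:0,1:] ^ d * A' ^ d" by (simp only: A power_mult_distrib)
    also have "[:0,1:] ^ d = [:0,1::complex:] * [:0,1:] ^ (d-1)" using assms(2) by (cases d) auto
    finally show ?thesis by (simp only: algebra_simps)
  qed
  have e2: "A * B ^ (d - 1) = [:0,1:] * (A' * B ^ (d - 1))" by (simp only: A mult.assoc)
  have p0: "poly A 0 = 0" using assms(1) by simp
  have nz: "[:0,1::complex:] \<noteq> 0" by simp
  have "ABc d A B 1 = ((A ^ d + [:0, 1:] * B ^ d) div [:0, 1:], (A * B ^ (d - 1)) div [:0, 1:])"
    unfolding ABc_one using p0 by simp
  also have "\<dots> = ([:0,1:] ^ (d - 1) * A' ^ d + B ^ d, A' * B ^ (d - 1))"
    by (simp only: e1 e2 nonzero_mult_div_cancel_left[OF nz])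
  finally show ?thesis by (simp add: Acn_def Bcn_def)
qed

lemma rec_poly:
  assumes "n \<ge> 1"
  shows "Acn d A B (Suc n) = Acn d A B n ^ d + [:0,1:] * Bcn d A B n ^ d \<and>
         Bcn d A B (Suc n) = Acn d A B n * Bcn d A B n ^ (d - 1)"
proof -
  obtain m where m: "n = Suc m" using assms by (cases n) auto
  show ?thesis unfolding m Acn_def Bcn_def by (simp add: case_prod_unfold Let_def)
qed

lemma coprime_B0:
  assumes "coprime A (B :: complex poly)" "poly A 0 = 0"
  shows "poly B 0 \<noteq> 0"
proof
  assume "poly B 0 = 0"
  then have "[:-0, 1:] dvd A" "[:-0, 1:] dvd B" using assms(2) by (simp_all only: poly_eq_0_iff_dvd)
  then have "is_unit [:-0, 1::complex:]" using coprime_common_divisor[OF assms(1)] by blast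
  then show False by (simp add: is_unit_iff_degree)
qed

context av
begin

lemma small_gen:
  assumes qP: "qbar_poly P" and qQ: "qbar_poly Q" and P0: "poly P 0 \<noteq> 0" and k: "k \<ge> 1"
  shows "\<exists>r>0. r \<le> 1/2 \<and> (\<exists>c0>0. \<forall>x. algebraic x \<longrightarrow> v x \<le> r \<longrightarrow>
           c0 \<le> v (poly P x ^ d + x ^ k * poly Q x ^ d))"
proof -
  obtain KP where KP: "KP \<ge> 0" "\<And>x. algebraic x \<Longrightarrow> v x \<le> 1 \<Longrightarrow> v (poly P 0) - KP * v x \<le> v (poly P x)"
    using poly_near0[OF qP] by blast
  obtain KQ where KQ: "KQ \<ge> 0" "\<And>x. algebraic x \<Longrightarrow> v x \<le> 1 \<Longrightarrow> v (poly Q x) \<le> KQ"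
    using poly_bound_small[OF qQ] by blast
  have p0: "v (poly P 0) > 0" using P0 qP by (intro v_pos) auto
  define h where "h = v (poly P 0) / 2"
  have h0: "h > 0" using p0 by (simp add: h_def)
  define r where "r = min (1/2) (min (h / (KP + 1)) (h ^ d / (2 * (KQ ^ d + 1))))"
  have "0 < h ^ d / (2 * (KQ ^ d + 1))" using h0 KQ(1) by (intro divide_pos_pos mult_pos_pos add_nonneg_pos zero_le_power) auto
  moreover have "0 < h / (KP + 1)" using h0 KP(1) by simp
  ultimately have r0: "r > 0" by (simp add: r_def)
  have r2: "r \<le> 1/2" unfolding r_def by (rule min.cobounded1)
  have "\<forall>x. algebraic x \<longrightarrow> v x \<le> r \<longrightarrow> h ^ d / 2 \<le> v (poly P x ^ d + x ^ k * poly Q x ^ d)"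
  proof (intro allI impI)
    fix x assume x: "algebraic x" "v x \<le> r"
    have vx0: "0 \<le> v x" using v_nonneg[OF x(1)] .
    have vx1: "v x \<le> 1" using x(2) r2 by linarith
    have "KP * v x \<le> KP * (h / (KP + 1))" using x(2) KP(1) by (intro mult_left_mono) (auto simp: r_def)
    also have "\<dots> \<le> h" using KP(1) h0 by (simp add: field_simps)
    finally have "h \<le> v (poly P x)" using KP(2)[OF x(1) vx1] by (simp add: h_def)
    then have hP: "h ^ d \<le> v (poly P x) ^ d" using h0 by (intro power_mono) auto
    have "v (x ^ k * poly Q x ^ d) = v x ^ k * v (poly Q x) ^ d"
      using x qQ by (simp add: v_mult v_pow)
    also have "\<dots> \<le> v x * KQ ^ d"
    proof (intro mult_mono)
      show "v x ^ k \<le> v x" using power_decreasing[of 1 k "v x"] k vx0 vx1 by simp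
      show "v (poly Q x) ^ d \<le> KQ ^ d" using KQ(2)[OF x(1) vx1] v_nonneg[of "poly Q x"] x qQ by (intro power_mono) auto
    qed (use vx0 KQ x qQ v_nonneg[of "poly Q x"] in auto)
    also have "\<dots> \<le> (h ^ d / (2 * (KQ ^ d + 1))) * KQ ^ d"
      using x(2) KQ(1) by (intro mult_right_mono) (auto simp: r_def)
    also have "\<dots> \<le> h ^ d / 2"
    proof -
      have "KQ ^ d \<le> KQ ^ d + 1" by simp
      then have "h ^ d * KQ ^ d \<le> h ^ d * (KQ ^ d + 1)" using h0 by (intro mult_left_mono) auto
      have D: "0 < KQ ^ d + 1" using KQ(1) by (simp add: add_nonneg_pos)
      have "h ^ d / (2 * (KQ ^ d + 1)) * KQ ^ d = (h ^ d * KQ ^ d) / (2 * (KQ ^ d + 1))" by simp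
      also have "\<dots> \<le> (h ^ d * (KQ ^ d + 1)) / (2 * (KQ ^ d + 1))"
        using \<open>h ^ d * KQ ^ d \<le> h ^ d * (KQ ^ d + 1)\<close> D by (intro divide_right_mono) auto
      also have "\<dots> = h ^ d / 2" using D by (simp add: divide_simps)
      finally show ?thesis .
    qed
    finally have s: "v (x ^ k * poly Q x ^ d) \<le> h ^ d / 2" .
    have "v (poly P x ^ d) - v (x ^ k * poly Q x ^ d) \<le> v (poly P x ^ d + x ^ k * poly Q x ^ d)"
      using x qP qQ by (intro v_diff_ge) auto
    then show "h ^ d / 2 \<le> v (poly P x ^ d + x ^ k * poly Q x ^ d)"
      using hP s x qP by (simp add: v_pow)
  qed
  moreover have "h ^ d / 2 > 0" using h0 by simp
  ultimately show ?thesis using r0 r2 by blast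
qed


lemma small_consts:
  assumes d2: "d \<ge> 2" and qA: "qbar_poly A" and qB: "qbar_poly B" and cop: "coprime A B"
  shows "\<exists>r>0. r \<le> 1/2 \<and> (\<exists>c0>0. \<exists>K0. \<forall>lam. algebraic lam \<longrightarrow> lam \<noteq> 0 \<longrightarrow> v lam \<le> r \<longrightarrow>
           c0 \<le> v (poly (Acn d A B 1) lam) \<and> v (poly (Bcn d A B 1) lam) \<le> K0)"
proof -
  have bnd: "\<exists>K. \<forall>lam. algebraic lam \<longrightarrow> v lam \<le> 1 \<longrightarrow> v (poly P lam * poly B lam ^ (d - 1)) \<le> K"
    if qP: "qbar_poly P" for P
  proof -
    obtain KA where KA: "KA \<ge> 0" "\<And>x. algebraic x \<Longrightarrow> v x \<le> 1 \<Longrightarrow> v (poly P x) \<le> KA"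
      using poly_bound_small[OF qP] by blast
    obtain KB where KB: "KB \<ge> 0" "\<And>x. algebraic x \<Longrightarrow> v x \<le> 1 \<Longrightarrow> v (poly B x) \<le> KB"
      using poly_bound_small[OF qB] by blast
    have "v (poly P lam * poly B lam ^ (d - 1)) \<le> KA * KB ^ (d - 1)"
      if "algebraic lam" "v lam \<le> 1" for lam
    proof -
      have "v (poly P lam * poly B lam ^ (d - 1)) = v (poly P lam) * v (poly B lam) ^ (d - 1)"
        using that qP qB by (simp add: v_mult v_pow)
      also have "\<dots> \<le> KA * KB ^ (d - 1)"
        using KA(2)[OF that] KB(2)[OF that] KA(1) v_nonneg[of "poly B lam"] that qB
        by (intro mult_mono power_mono) auto
      finally show ?thesis .
    qed
    then show ?thesis by blast
  qed
  show ?thesis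
  proof (cases "poly A 0 = 0")
    case False
    obtain r c0 where r: "r > 0" "r \<le> 1/2" "c0 > 0"
      "\<And>x. algebraic x \<Longrightarrow> v x \<le> r \<Longrightarrow> c0 \<le> v (poly A x ^ d + x ^ 1 * poly B x ^ d)"
      using small_gen[OF qA qB False, of 1 d] by auto
    obtain K0 where K0: "\<And>lam. algebraic lam \<Longrightarrow> v lam \<le> 1 \<Longrightarrow> v (poly A lam * poly B lam ^ (d - 1)) \<le> K0"
      using bnd[OF qA] by blast
    have "\<forall>lam. algebraic lam \<longrightarrow> lam \<noteq> 0 \<longrightarrow> v lam \<le> r \<longrightarrow>
           c0 \<le> v (poly (Acn d A B 1) lam) \<and> v (poly (Bcn d A B 1) lam) \<le> K0"
    proof (intro allI impI conjI)
      fix lam assume lam: "algebraic lam" "lam \<noteq> 0" "v lam \<le> r"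
      have l1: "v lam \<le> 1" using lam(3) r(2) by linarith
      have e: "poly (Acn d A B 1) lam = poly A lam ^ d + lam ^ 1 * poly B lam ^ d"
        "poly (Bcn d A B 1) lam = poly A lam * poly B lam ^ (d - 1)"
        using lev1_nodiv[OF False, of d B] by simp_all
      show "c0 \<le> v (poly (Acn d A B 1) lam)" unfolding e(1) by (rule r(4)[OF lam(1) lam(3)])
      show "v (poly (Bcn d A B 1) lam) \<le> K0" unfolding e(2) by (rule K0[OF lam(1) l1])
    qed
    then show ?thesis using r by blast
  next
    case True
    obtain A' where A': "A = pCons 0 A'" using True by (cases A) auto
    have qA': "qbar_poly A'" using qA by (simp add: A' qbar_pCons)
    have B0: "poly B 0 \<noteq> 0" by (rule coprime_B0[OF cop True])
    have k1: "d - 1 \<ge> 1" using d2 by simp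
    obtain r c0 where r: "r > 0" "r \<le> 1/2" "c0 > 0"
      "\<And>x. algebraic x \<Longrightarrow> v x \<le> r \<Longrightarrow> c0 \<le> v (poly B x ^ d + x ^ (d - 1) * poly A' x ^ d)"
      using small_gen[OF qB qA' B0 k1, of d] by auto
    obtain K0 where K0: "\<And>lam. algebraic lam \<Longrightarrow> v lam \<le> 1 \<Longrightarrow> v (poly A' lam * poly B lam ^ (d - 1)) \<le> K0"
      using bnd[OF qA'] by blast
    have L: "Acn d A B 1 = [:0,1:] ^ (d - 1) * A' ^ d + B ^ d \<and> Bcn d A B 1 = A' * B ^ (d - 1)"
      using lev1_div[OF A'] d2 by simp
    have "\<forall>lam. algebraic lam \<longrightarrow> lam \<noteq> 0 \<longrightarrow> v lam \<le> r \<longrightarrow>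
           c0 \<le> v (poly (Acn d A B 1) lam) \<and> v (poly (Bcn d A B 1) lam) \<le> K0"
    proof (intro allI impI conjI)
      fix lam assume lam: "algebraic lam" "lam \<noteq> 0" "v lam \<le> r"
      have l1: "v lam \<le> 1" using lam(3) r(2) by linarith
      have e: "poly (Acn d A B 1) lam = poly B lam ^ d + lam ^ (d - 1) * poly A' lam ^ d"
        "poly (Bcn d A B 1) lam = poly A' lam * poly B lam ^ (d - 1)"
        using L by (simp_all add: poly_power add.commute)
      show "c0 \<le> v (poly (Acn d A B 1) lam)" unfolding e(1) by (rule r(4)[OF lam(1) lam(3)])
      show "v (poly (Bcn d A B 1) lam) \<le> K0" unfolding e(2) by (rule K0[OF lam(1) l1])
    qed
    then show ?thesis using r by blast
  qed
qed

lemma large_consts: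
  assumes d2: "d \<ge> 2" and qA: "qbar_poly A" and qB: "qbar_poly B" and A0: "A \<noteq> 0" and B0: "B \<noteq> 0"
  shows "\<exists>R\<ge>1. \<exists>K1\<ge>1. \<forall>lam. algebraic lam \<longrightarrow> lam \<noteq> 0 \<longrightarrow> R \<le> v lam \<longrightarrow>
           v lam ^ 2 * v (poly (Bcn d A B 1) lam) ^ d \<le> K1 * v (poly (Acn d A B 1) lam) ^ d"
proof -
  obtain cA CA RA where A: "cA > 0" "CA > 0" "RA \<ge> 1"
    "\<And>x. algebraic x \<Longrightarrow> RA \<le> v x \<Longrightarrow> cA * v x ^ degree A \<le> v (poly A x) \<and> v (poly A x) \<le> CA * v x ^ degree A"
    using poly_large[OF qA A0] by blast
  obtain cB CB RB where B: "cB > 0" "CB > 0" "RB \<ge> 1"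
    "\<And>x. algebraic x \<Longrightarrow> RB \<le> v x \<Longrightarrow> cB * v x ^ degree B \<le> v (poly B x) \<and> v (poly B x) \<le> CB * v x ^ degree B"
    using poly_large[OF qB B0] by blast
  define R where "R = max RA (max RB (max (2 * CB ^ d / cA ^ d) (2 * CA ^ d / cB ^ d)))"
  define K where "K = max ((CA * CB ^ (d - 1)) ^ d / (cA ^ d / 2) ^ d) ((CA * CB ^ (d - 1)) ^ d / (cB ^ d / 2) ^ d)"
  define K1 where "K1 = max 1 K"
  have R1: "R \<ge> 1" using A(3) by (simp add: R_def)
  have main: "v lam ^ 2 * v (poly A lam * poly B lam ^ (d - 1)) ^ d \<le> K * v (poly A lam ^ d + lam * poly B lam ^ d) ^ d"
    if lam: "algebraic lam" "R \<le> v lam" for lam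
  proof -
    have RA: "RA \<le> v lam" and RB: "RB \<le> v lam" using lam(2) by (auto simp: R_def)
    have t1: "1 \<le> v lam" using A(3) RA by linarith
    have tA: "2 * CB ^ d / cA ^ d \<le> v lam" and tB: "2 * CA ^ d / cB ^ d \<le> v lam" using lam(2) by (auto simp: R_def)
    have P1: "v (poly A lam) ^ d - v lam * v (poly B lam) ^ d \<le> v (poly A lam ^ d + lam * poly B lam ^ d)"
      using v_diff_ge[of "poly A lam ^ d" "lam * poly B lam ^ d"] lam qA qB by (simp add: v_mult v_pow)
    have P2: "v lam * v (poly B lam) ^ d - v (poly A lam) ^ d \<le> v (poly A lam ^ d + lam * poly B lam ^ d)"
      using v_diff_ge'[of "poly A lam ^ d" "lam * poly B lam ^ d"] lam qA qB by (simp add: v_mult v_pow)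
    have "v lam ^ 2 * (v (poly A lam) * v (poly B lam) ^ (d - 1)) ^ d \<le> K * v (poly A lam ^ d + lam * poly B lam ^ d) ^ d"
      unfolding K_def
      by (rule asym_real[OF t1 d2 A(1) B(1) conjunct1[OF A(4)[OF lam(1) RA]] conjunct2[OF A(4)[OF lam(1) RA]]
            conjunct1[OF B(4)[OF lam(1) RB]] conjunct2[OF B(4)[OF lam(1) RB]] tA tB P1 P2])
    then show ?thesis using lam qA qB by (simp add: v_mult v_pow)
  qed
  have "\<forall>lam. algebraic lam \<longrightarrow> lam \<noteq> 0 \<longrightarrow> R \<le> v lam \<longrightarrow>
           v lam ^ 2 * v (poly (Bcn d A B 1) lam) ^ d \<le> K1 * v (poly (Acn d A B 1) lam) ^ d"
  proof (intro allI impI)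
    fix lam assume lam: "algebraic lam" "lam \<noteq> 0" "R \<le> v lam"
    have t0: "v lam > 0" using v_pos lam by auto
    show "v lam ^ 2 * v (poly (Bcn d A B 1) lam) ^ d \<le> K1 * v (poly (Acn d A B 1) lam) ^ d"
    proof (cases "poly A 0 = 0")
      case False
      have e: "poly (Acn d A B 1) lam = poly A lam ^ d + lam * poly B lam ^ d"
        "poly (Bcn d A B 1) lam = poly A lam * poly B lam ^ (d - 1)"
        using lev1_nodiv[OF False, of d B] by simp_all
      have "K * v (poly A lam ^ d + lam * poly B lam ^ d) ^ d \<le> K1 * v (poly A lam ^ d + lam * poly B lam ^ d) ^ d"
        using v_nonneg[of "poly A lam ^ d + lam * poly B lam ^ d"] lam qA qB by (intro mult_right_mono) (auto simp: K1_def)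
      then show ?thesis unfolding e using main[OF lam(1) lam(3)] by linarith
    next
      case True
      obtain A' where A': "A = pCons 0 A'" using True by (cases A) auto
      have qA': "qbar_poly A'" using qA by (simp add: A' qbar_pCons)
      have L: "Acn d A B 1 = [:0,1:] ^ (d - 1) * A' ^ d + B ^ d \<and> Bcn d A B 1 = A' * B ^ (d - 1)"
        using lev1_div[OF A'] d2 by simp
      define a1 where "a1 = poly (Acn d A B 1) lam"
      define b1 where "b1 = poly (Bcn d A B 1) lam"
      have a1: "a1 = lam ^ (d - 1) * poly A' lam ^ d + poly B lam ^ d" using L by (simp add: a1_def poly_power)
      have b1: "b1 = poly A' lam * poly B lam ^ (d - 1)" using L by (simp add: b1_def)
      have pA: "poly A lam = lam * poly A' lam" by (simp add: A')
      have ll: "lam * lam ^ (d - 1) = lam ^ d" using d2 by (cases d) auto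
      have sa: "lam * a1 = poly A lam ^ d + lam * poly B lam ^ d"
        by (simp add: a1 pA power_mult_distrib algebra_simps ll[symmetric])
      have sb: "lam * b1 = poly A lam * poly B lam ^ (d - 1)" by (simp add: b1 pA)
      have alg1: "algebraic a1" "algebraic b1" using a1 b1 lam qA' qB by auto
      have va: "v (lam * a1) = v lam * v a1" and vb: "v (lam * b1) = v lam * v b1"
        using alg1 lam by (simp_all add: v_mult)
      have "v lam ^ d * (v lam ^ 2 * v b1 ^ d) = v lam ^ 2 * v (lam * b1) ^ d"
        by (simp add: vb power_mult_distrib)
      also have "\<dots> \<le> K * v (lam * a1) ^ d" unfolding sa sb by (rule main[OF lam(1) lam(3)])
      also have "\<dots> \<le> K1 * v (lam * a1) ^ d"
        using v_nonneg[of "lam * a1"] alg1 lam by (intro mult_right_mono) (auto simp: K1_def)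
      also have "\<dots> = v lam ^ d * (K1 * v a1 ^ d)" by (simp add: va power_mult_distrib)
      finally have "v lam ^ 2 * v b1 ^ d \<le> K1 * v a1 ^ d" using t0 by simp
      then show ?thesis by (simp add: a1_def b1_def)
    qed
  qed
  moreover have "K1 \<ge> 1" by (simp add: K1_def)
  ultimately show ?thesis using R1 by blast
qed
end

theorem proposition6p5:
  fixes d :: nat and A B :: "complex poly" and v :: "complex \<Rightarrow> real"
  assumes "d \<ge> 2"
    and "qbar_poly A" and "qbar_poly B"
    and "A \<noteq> 0" and "B \<noteq> 0"
    and "coprime A B"
    and "\<not> (\<exists>k. A = smult k B)"
    and "abs_value_qbar v"
  shows "\<exists>C::real. \<forall>lam. algebraic lam \<and> lam \<noteq> 0 \<and> poly A lam \<noteq> 0 \<and> poly B lam \<noteq> 0 \<longrightarrow>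
           (\<exists>L. (\<lambda>n. ln (Mnv v d A B lam n) / real d ^ n) \<longlonglongrightarrow> L \<and>
                \<bar>L - ln (Mnv v d A B lam 2) / real d ^ 2\<bar> \<le> C)"
proof -
  interpret av v by unfold_locales (rule assms(8))
  have d2: "d \<ge> 2" by (rule assms(1))
  obtain r where r: "r > 0" "r \<le> 1/2" and "\<exists>c0>0. \<exists>K0. \<forall>lam. algebraic lam \<longrightarrow> lam \<noteq> 0 \<longrightarrow> v lam \<le> r \<longrightarrow>
           c0 \<le> v (poly (Acn d A B 1) lam) \<and> v (poly (Bcn d A B 1) lam) \<le> K0"
    using small_consts[OF assms(1) assms(2) assms(3) assms(6)] by blast
  then obtain c0 K0 where c0: "c0 > 0" and sc: "\<And>lam. algebraic lam \<Longrightarrow> lam \<noteq> 0 \<Longrightarrow> v lam \<le> r \<Longrightarrow>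
           c0 \<le> v (poly (Acn d A B 1) lam) \<and> v (poly (Bcn d A B 1) lam) \<le> K0"
    by blast
  obtain R K1 where R1: "R \<ge> 1" and K1: "K1 \<ge> 1" and lc: "\<And>lam. algebraic lam \<Longrightarrow> lam \<noteq> 0 \<Longrightarrow> R \<le> v lam \<Longrightarrow>
           v lam ^ 2 * v (poly (Bcn d A B 1) lam) ^ d \<le> K1 * v (poly (Acn d A B 1) lam) ^ d"
    using large_consts[OF assms(1) assms(2) assms(3) assms(4) assms(5)] by blast
  define \<rho> where "\<rho> = real d - 1/2"
  define W where "W = max 2 (ln (max 1 (K0 / c0)))"
  define Zm where "Zm = 2 * (R + 1 / r) + 2"
  define K where "K = max (ln 4) (max (ln (4 * K1)) (ln Zm))"
  define \<mu> where "\<mu> = max (real d * W) (2 * real d * ln 2)"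
  define C where "C = (\<Sum>j. (K + \<mu> * \<rho> ^ (j + 2)) / real d ^ (j + 3))"
  have \<rho>1: "\<rho> \<ge> 1" and \<rho>d: "\<rho> < real d" using d2 by (auto simp: \<rho>_def)
  have W2: "W \<ge> 2" by (simp add: W_def)
  have \<mu>0: "\<mu> \<ge> 0" using W2 by (simp add: \<mu>_def le_max_iff_disj)
  have "\<forall>lam. algebraic lam \<and> lam \<noteq> 0 \<and> poly A lam \<noteq> 0 \<and> poly B lam \<noteq> 0 \<longrightarrow>
           (\<exists>L. (\<lambda>n. ln (Mnv v d A B lam n) / real d ^ n) \<longlonglongrightarrow> L \<and>
                \<bar>L - ln (Mnv v d A B lam 2) / real d ^ 2\<bar> \<le> C)"
  proof (intro allI impI)
    fix lam assume lam: "algebraic lam \<and> lam \<noteq> 0 \<and> poly A lam \<noteq> 0 \<and> poly B lam \<noteq> 0"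
    then have lamA: "algebraic lam" and lam0: "lam \<noteq> 0" and pA: "poly A lam \<noteq> 0" and pB: "poly B lam \<noteq> 0" by auto
    define a where "a n = poly (Acn d A B n) lam" for n
    define b where "b n = poly (Bcn d A B n) lam" for n
    have reca: "a (Suc n) = a n ^ d + lam * b n ^ d" and recb: "b (Suc n) = a n * b n ^ (d - 1)" if "n \<ge> 1" for n
      using rec_poly[OF that, of d A B] by (simp_all add: a_def b_def)
    have lev1: "algebraic (a 1) \<and> algebraic (b 1) \<and> b 1 \<noteq> 0"
    proof (cases "poly A 0 = 0")
      case False
      have e: "a 1 = poly A lam ^ d + lam * poly B lam ^ d" "b 1 = poly A lam * poly B lam ^ (d - 1)"
        using lev1_nodiv[OF False, of d B] by (simp_all add: a_def b_def)
      show ?thesis unfolding e using lamA assms(2,3) pA pB by auto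
    next
      case True
      obtain A' where A': "A = pCons 0 A'" using True by (cases A) auto
      have qA': "qbar_poly A'" using assms(2) by (simp add: A' qbar_pCons)
      have L: "Acn d A B 1 = [:0,1:] ^ (d - 1) * A' ^ d + B ^ d \<and> Bcn d A B 1 = A' * B ^ (d - 1)"
        using lev1_div[OF A'] d2 by simp
      have e: "a 1 = lam ^ (d - 1) * poly A' lam ^ d + poly B lam ^ d" "b 1 = poly A' lam * poly B lam ^ (d - 1)"
        using L by (simp_all add: a_def b_def poly_power)
      have "poly A' lam \<noteq> 0" using pA by (simp add: A')
      then show ?thesis unfolding e using lamA qA' assms(3) pB by auto
    qed
    have alg: "algebraic (a n) \<and> algebraic (b n)" for n
    proof (induction n)
      case 0 then show ?case using lamA assms(2,3) by (simp add: a_def b_def Acn_def Bcn_def)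
    next
      case (Suc n)
      show ?case
      proof (cases "n = 0")
        case True then show ?thesis using lev1 by simp
      next
        case False
        then have "n \<ge> 1" by simp
        then show ?thesis using Suc lamA by (simp add: reca recb)
      qed
    qed
    interpret dy: dyn v d lam a b
      by unfold_locales (use d2 lamA lam0 alg reca recb lev1 in auto)
    define t where "t = v lam"
    have t0: "t > 0" using dy.t_pos by (simp add: t_def)
    have bound: "\<bar>ln (dy.M (Suc n)) - real d * ln (dy.M n)\<bar> \<le> K + \<mu> * \<rho> ^ n" if n: "n \<ge> 1" for n
    proof -
      have Mp: "dy.M n > 0" "dy.M (Suc n) > 0" using dy.M_pos n by auto
      have \<rho>n: "0 \<le> \<rho> ^ n" using \<rho>1 by simp
      consider "t \<le> r" | "R \<le> t" | "r < t" "t < R" by linarith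
      then show ?thesis
      proof cases
        case 1
        have sc1: "c0 \<le> v (a 1)" "v (b 1) \<le> K0" using sc[OF lamA lam0] 1 by (auto simp: a_def b_def t_def)
        have "K0 \<le> max 1 (K0 / c0) * c0" using c0 by (simp add: max_def field_simps)
        also have "max 1 (K0 / c0) = exp (ln (max 1 (K0 / c0)))" by simp
        also have "exp (ln (max 1 (K0 / c0))) \<le> exp (W * \<rho>)"
        proof -
          have "ln (max 1 (K0 / c0)) \<le> W" by (simp add: W_def)
          also have "W \<le> W * \<rho>" using W2 \<rho>1 mult_left_mono[of 1 \<rho> W] by simp
          finally show ?thesis by (simp only: exp_le_cancel_iff)
        qed
        finally have "K0 \<le> exp (W * \<rho>) * c0" using c0 by (simp add: mult_right_mono)
        also have "\<dots> \<le> exp (W * \<rho>) * v (a 1)" using sc1 by (intro mult_left_mono) auto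
        finally have base: "v (b 1) \<le> exp (W * (real d - 1/2)) * v (a 1)" using sc1 by (simp add: \<rho>_def)
        have t12: "v lam \<le> 1/2" using 1 r by (simp add: t_def)
        define Z where "Z = 4 * exp (W * (real d - 1/2) ^ n) ^ d"
        have Z0: "Z > 0" by (simp add: Z_def)
        have "\<bar>ln (dy.M (Suc n)) - real d * ln (dy.M n)\<bar> \<le> ln Z"
          using dy.regime_small[OF t12 W2 base n] Mp Z0 by (intro log_bound) (auto simp: Z_def)
        also have "ln Z = ln 4 + real d * (W * \<rho> ^ n)"
          by (simp add: Z_def ln_mult ln_realpow \<rho>_def)
        also have "\<dots> \<le> K + \<mu> * \<rho> ^ n"
        proof (rule add_mono)
          show "ln 4 \<le> K" by (simp add: K_def)
          have "real d * (W * \<rho> ^ n) = (real d * W) * \<rho> ^ n" by simp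
          also have "\<dots> \<le> \<mu> * \<rho> ^ n" using \<rho>n by (intro mult_right_mono) (auto simp: \<mu>_def)
          finally show "real d * (W * \<rho> ^ n) \<le> \<mu> * \<rho> ^ n" .
        qed
        finally show ?thesis .
      next
        case 2
        have t1: "v lam \<ge> 1" using 2 R1 by (simp add: t_def)
        have base: "v lam ^ 2 * v (b 1) ^ d \<le> K1 * v (a 1) ^ d"
          using lc[OF lamA lam0] 2 by (simp add: a_def b_def t_def)
        define Z where "Z = 4 * K1 * 2 ^ (d * (n - 1))"
        have Z0: "Z > 0" using K1 by (simp add: Z_def)
        have "\<bar>ln (dy.M (Suc n)) - real d * ln (dy.M n)\<bar> \<le> ln Z"
          using dy.regime_large[OF t1 K1 base n] Mp Z0 by (intro log_bound) (auto simp: Z_def)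
        also have "ln Z = ln (4 * K1) + real (d * (n - 1)) * ln 2"
          using K1 by (simp add: Z_def ln_mult ln_realpow)
        also have "\<dots> \<le> K + \<mu> * \<rho> ^ n"
        proof (rule add_mono)
          show "ln (4 * K1) \<le> K" by (simp add: K_def)
          have "1 + real n * (\<rho> - 1) \<le> (1 + (\<rho> - 1)) ^ n" using \<rho>1 by (intro Bernoulli_inequality) auto
          then have bi: "1 + real n * (\<rho> - 1) \<le> \<rho> ^ n" by simp
          have "(2::real) \<le> real d" using d2 by simp
          then have r12: "1/2 \<le> \<rho> - 1" by (simp add: \<rho>_def)
          have "real n * (1/2) \<le> real n * (\<rho> - 1)" using r12 by (intro mult_left_mono) auto
          then have "real n * (1/2) \<le> \<rho> ^ n" using bi by linarith
          then have nb: "real n \<le> 2 * \<rho> ^ n" by simp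
          have "d * (n - 1) \<le> d * n" by simp
          then have "real (d * (n - 1)) \<le> real d * real n" by (metis of_nat_le_iff of_nat_mult)
          then have "real (d * (n - 1)) * ln 2 \<le> real d * real n * ln 2"
            by (intro mult_right_mono) auto
          also have "\<dots> \<le> real d * (2 * \<rho> ^ n) * ln 2"
            using nb by (intro mult_right_mono mult_left_mono) auto
          also have "\<dots> = (2 * real d * ln 2) * \<rho> ^ n" by simp
          also have "\<dots> \<le> \<mu> * \<rho> ^ n" using \<rho>n by (intro mult_right_mono) (auto simp: \<mu>_def)
          finally show "real (d * (n - 1)) * ln 2 \<le> \<mu> * \<rho> ^ n" .
        qed
        finally show ?thesis .
      next
        case 3
        have "\<bar>ln (dy.M (Suc n)) - real d * ln (dy.M n)\<bar> \<le> ln dy.Zg"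
          using dy.gen_bound[OF n] Mp t0 by (intro log_bound) (auto simp: dy.Zg_def t_def intro!: add_pos_pos)
        also have "\<dots> \<le> ln Zm"
        proof -
          have "1 / t \<le> 1 / r" using 3 r t0 by (intro divide_left_mono) auto
          then have "dy.Zg \<le> Zm" using 3 by (simp add: dy.Zg_def Zm_def t_def)
          moreover have "dy.Zg > 0" using t0 by (simp add: dy.Zg_def t_def add_pos_pos)
          ultimately show ?thesis by simp
        qed
        also have "\<dots> \<le> K" by (simp add: K_def)
        also have "\<dots> \<le> K + \<mu> * \<rho> ^ n" using mult_nonneg_nonneg[OF \<mu>0 \<rho>n] by simp
        finally show ?thesis .
      qed
    qed
    obtain L where L: "(\<lambda>n. ln (dy.M n) / real d ^ n) \<longlonglongrightarrow> L"
      "\<bar>L - ln (dy.M 2) / real d ^ 2\<bar> \<le> C"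
      using sum_lemma[OF d2 _ \<rho>d bound] \<rho>1 unfolding C_def by auto
    have MM: "Mnv v d A B lam n = dy.M n" for n by (simp add: Mnv_def dy.M_def a_def b_def)
    show "\<exists>L. (\<lambda>n. ln (Mnv v d A B lam n) / real d ^ n) \<longlonglongrightarrow> L \<and>
                \<bar>L - ln (Mnv v d A B lam 2) / real d ^ 2\<bar> \<le> C"
      using L unfolding MM by blast
  qed
  then show ?thesis by blast
qed

end
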